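(* Let $Q_r=(-r,r)^d$. Then $\lim_{r\to\infty}\sup_{g\in\mathcal G_d(Q_r)}\|g\|^2_{L^2(Q_r)}=1$. Moreover, if $d/2<p<\min\{2,d\}$, then \[ \lim_{r\to\infty}\sup_{g\in\mathcal G_d(Q_r)}\int_{Q_r}\frac{g^2(x)}{|x|^p}dx=\rho(d,p)=\Big(\frac{2-p}{2}\Big)^{(2-p)/2}p^{p/2}\sigma(d,p). \]
   Context: For a domain $D$, $W^{1,2}(D)$ is the closure of $C_c^\infty(D)$ under $(\|g\|^2_{L^2(D)}+\|\nabla g\|^2_{L^2(D)})^{1/2}$ and $\mathcal G_d(D)=\{g\in W^{1,2}(D):\|g\|^2_{L^2(D)}+\frac12\|\nabla g\|^2_{L^2(D)}=1\}$; $\mathcal G_d=\mathcal G_d(\mathbb R^d)$. $\rho(d,p)=\sup_{g\in\mathcal G_d}\int_{\mathbb R^d}g^2(x)|x|^{-p}dx$. $\sigma(d,p)$ is the smallest constant $C$ such that $\int_{\mathbb R^d}f^2|x|^{-p}dx\le C\|f\|_2^{2-p}\|\nabla f\|_2^p$ for all $f\in W^{1,2}(\mathbb R^d)$. *)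

theory Defs
  imports "HOL-Analysis.Analysis"
begin

coinductive smooth_fun :: "('a::euclidean_space \<Rightarrow> real) \<Rightarrow> bool" where
  "(\<forall>x. f differentiable (at x)) \<Longrightarrow>
   (\<forall>b\<in>Basis. smooth_fun (\<lambda>x. frechet_derivative f (at x) b)) \<Longrightarrow> smooth_fun f"

definition grad :: "('a::euclidean_space \<Rightarrow> real) \<Rightarrow> 'a \<Rightarrow> 'a" where
  "grad f x = (\<Sum>b\<in>Basis. frechet_derivative f (at x) b *\<^sub>R b)"

definition test_fun :: "'a::euclidean_space set \<Rightarrow> ('a \<Rightarrow> real) \<Rightarrow> bool" where
  "test_fun D f \<longleftrightarrow> smooth_fun f \<and> compact (closure {x. f x \<noteq> 0})
      \<and> closure {x. f x \<noteq> 0} \<subseteq> D"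

definition L2sq :: "'a::euclidean_space set \<Rightarrow> ('a \<Rightarrow> real) \<Rightarrow> real" where
  "L2sq D g = set_lebesgue_integral lborel D (\<lambda>x. (g x)\<^sup>2)"

definition L2sq_vec :: "'a::euclidean_space set \<Rightarrow> ('a \<Rightarrow> 'a) \<Rightarrow> real" where
  "L2sq_vec D G = set_lebesgue_integral lborel D (\<lambda>x. (norm (G x))\<^sup>2)"

text \<open>W^{1,2}(D): closure of C_c^infinity(D) in the H^1 norm. An element is represented
  by a pair (g, G) with G the (weak) gradient of g, i.e. the H^1-limit of test functions
  and of their gradients.\<close>
definition W12 :: "'a::euclidean_space set \<Rightarrow> (('a \<Rightarrow> real) \<times> ('a \<Rightarrow> 'a)) set" where
  "W12 D = {(g, G). g \<in> borel_measurable lborel \<and> G \<in> borel_measurable lborel \<and>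
      set_integrable lborel D (\<lambda>x. (g x)\<^sup>2) \<and>
      set_integrable lborel D (\<lambda>x. (norm (G x))\<^sup>2) \<and>
      (\<exists>\<phi>. (\<forall>k. test_fun D (\<phi> k)) \<and>
         (\<lambda>k. set_nn_integral lborel D (\<lambda>x. ennreal ((\<phi> k x - g x)\<^sup>2))) \<longlonglongrightarrow> 0 \<and>
         (\<lambda>k. set_nn_integral lborel D (\<lambda>x. ennreal ((norm (grad (\<phi> k) x - G x))\<^sup>2)))
            \<longlonglongrightarrow> 0)}"

definition Gset :: "'a::euclidean_space set \<Rightarrow> (('a \<Rightarrow> real) \<times> ('a \<Rightarrow> 'a)) set" where
  "Gset D = {(g, G) \<in> W12 D. L2sq D g + 1/2 * L2sq_vec D G = 1}"

definition hardy_sup :: "'a::euclidean_space set \<Rightarrow> real \<Rightarrow> ennreal" where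
  "hardy_sup D p = Sup ((\<lambda>(g, G). set_nn_integral lborel D
       (\<lambda>x. ennreal ((g x)\<^sup>2 * norm x powr (- p)))) ` Gset D)"

text \<open>rho(d,p), with d = DIM('a).\<close>
definition rho :: "'a::euclidean_space itself \<Rightarrow> real \<Rightarrow> ennreal" where
  "rho _ p = hardy_sup (UNIV :: 'a set) p"

definition sigma :: "'a::euclidean_space itself \<Rightarrow> real \<Rightarrow> ennreal" where
  "sigma _ p = Inf {C. \<forall>(f, F) \<in> W12 (UNIV :: 'a set).
       set_nn_integral lborel UNIV (\<lambda>x. ennreal ((f x)\<^sup>2 * norm x powr (- p)))
       \<le> C * ennreal (sqrt (L2sq UNIV f) powr (2 - p) * sqrt (L2sq_vec UNIV F) powr p)}"

definition cube :: "real \<Rightarrow> 'a::euclidean_space set" where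
  "cube r = box (- (r *\<^sub>R One)) (r *\<^sub>R One)"

end

theory Submission
  imports Defs "HOL-Real_Asymp.Real_Asymp"
begin

definition H :: "nat \<Rightarrow> real \<Rightarrow> real" where
  "H n t = (if t > 0 then exp (-1/t) / t^n else 0)"

lemma H_lim0: "((\<lambda>t. exp (-1/t) / t^m) \<longlongrightarrow> (0::real)) (at_right 0)"
proof -
  have "((\<lambda>x. x ^ m / exp x) \<longlongrightarrow> (0::real)) at_top" by (rule tendsto_power_div_exp_0)
  then have "((\<lambda>t. (inverse t) ^ m / exp (inverse t)) \<longlongrightarrow> (0::real)) (at_right 0)"
    using filterlim_compose filterlim_inverse_at_top_right by blast
  then show ?thesis
    by (rule tendsto_cong[THEN iffD1, rotated])
       (auto simp: eventually_at_right_less exp_minus field_simps power_inverse intro!: eventually_mono[OF eventually_at_right_less])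
qed

definition H' :: "nat \<Rightarrow> real \<Rightarrow> real" where
  "H' n t = H (n+2) t - real n * H (n+1) t"

lemma H_deriv: "(H n has_real_derivative H' n t) (at t)"
proof -
  consider "t > 0" | "t < 0" | "t = 0" by linarith
  then show ?thesis
  proof cases
    case 1
    have d: "((\<lambda>y. exp (-1/y) / y^n) has_real_derivative H' n t) (at t)"
      using 1
      apply (auto intro!: derivative_eq_intros simp: H'_def H_def)
      apply (cases n)
       apply (auto simp: field_simps power2_eq_square)
      done
    show ?thesis
      apply (rule has_field_derivative_transform_within_open[OF d, of "{0<..}"])
      using 1 by (auto simp: H_def)
  next
    case 2
    have d: "((\<lambda>y. 0) has_real_derivative H' n t) (at t)"
      using 2 by (auto intro!: derivative_eq_intros simp: H'_def H_def)
    show ?thesis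
      apply (rule has_field_derivative_transform_within_open[OF d, of "{..<0}"])
      using 2 by (auto simp: H_def)
  next
    case 3
    have "((\<lambda>y. (H n y - H n 0) / (y - 0)) \<longlongrightarrow> 0) (at 0)"
    proof (rule filterlim_split_at)
      show "((\<lambda>y. (H n y - H n 0) / (y - 0)) \<longlongrightarrow> 0) (at_left (0::real))"
        by (rule tendsto_cong[THEN iffD1, rotated, OF tendsto_const])
           (auto simp: H_def eventually_at_filter)
      show "((\<lambda>y. (H n y - H n 0) / (y - 0)) \<longlongrightarrow> 0) (at_right (0::real))"
        by (rule tendsto_cong[THEN iffD1, rotated, OF H_lim0[of "Suc n"]])
           (auto simp: H_def eventually_at_right_less intro!: eventually_mono[OF eventually_at_right_less])
    qed
    then show ?thesis using 3
      by (simp add: has_field_derivative_iff H'_def H_def)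
  qed
qed

inductive_set alg :: "('a::euclidean_space \<Rightarrow> real) set" where
  const: "(\<lambda>x. c) \<in> alg"
| lin: "(\<lambda>x. x \<bullet> v) \<in> alg"
| sq: "(\<lambda>x. x \<bullet> x) \<in> alg"
| add: "f \<in> alg \<Longrightarrow> g \<in> alg \<Longrightarrow> (\<lambda>x. f x + g x) \<in> alg"
| mult: "f \<in> alg \<Longrightarrow> g \<in> alg \<Longrightarrow> (\<lambda>x. f x * g x) \<in> alg"
| comp: "f \<in> alg \<Longrightarrow> (\<lambda>x. H n (f x)) \<in> alg"

lemma H'_alg: assumes "f \<in> alg" shows "(\<lambda>x. H' n (f x)) \<in> alg"
proof -
  have "(\<lambda>x. H (n+2) (f x) + (\<lambda>x. - real n) x * H (n+1) (f x)) \<in> alg"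
    by (intro alg.add alg.mult alg.comp alg.const assms)
  then show ?thesis by (simp add: H'_def)
qed

lemma alg_deriv:
  assumes "f \<in> alg"
  shows "\<exists>D. (\<forall>x. (f has_derivative (\<lambda>v. D v x)) (at x)) \<and> (\<forall>v. (\<lambda>x. D v x) \<in> alg)"
  using assms
proof induction
  case (const c)
  show ?case by (rule exI[of _ "\<lambda>v x. 0"]) (auto intro!: derivative_eq_intros alg.intros)
next
  case (lin v)
  show ?case by (rule exI[of _ "\<lambda>w x. w \<bullet> v"]) (auto intro!: derivative_eq_intros alg.intros)
next
  case sq
  show ?case
  proof (rule exI[of _ "\<lambda>w x. 2 * (x \<bullet> w)"], intro conjI allI)
    fix x :: 'a
    show "((\<lambda>x. x \<bullet> x) has_derivative (\<lambda>w. 2 * (x \<bullet> w))) (at x)"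
      by (auto intro!: derivative_eq_intros simp: inner_commute)
    fix w :: 'a
    show "(\<lambda>x. 2 * (x \<bullet> w)) \<in> alg"
      using alg.mult[OF alg.const alg.lin, of 2 w] by simp
  qed
next
  case (add f g)
  then obtain D1 D2 where d1: "\<forall>x. (f has_derivative (\<lambda>v. D1 v x)) (at x)" "\<forall>v. (\<lambda>x. D1 v x) \<in> alg"
    and d2: "\<forall>x. (g has_derivative (\<lambda>v. D2 v x)) (at x)" "\<forall>v. (\<lambda>x. D2 v x) \<in> alg" by blast
  show ?case
    by (rule exI[of _ "\<lambda>v x. D1 v x + D2 v x"])
       (use d1 d2 in \<open>auto intro!: derivative_eq_intros alg.intros\<close>)
next
  case (mult f g)
  then obtain D1 D2 where d1: "\<forall>x. (f has_derivative (\<lambda>v. D1 v x)) (at x)" "\<forall>v. (\<lambda>x. D1 v x) \<in> alg"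
    and d2: "\<forall>x. (g has_derivative (\<lambda>v. D2 v x)) (at x)" "\<forall>v. (\<lambda>x. D2 v x) \<in> alg" by blast
  show ?case
    by (rule exI[of _ "\<lambda>v x. f x * D2 v x + D1 v x * g x"])
       (use d1 d2 mult in \<open>auto intro!: derivative_eq_intros alg.intros\<close>)
next
  case (comp f n)
  then obtain D1 where d1: "\<forall>x. (f has_derivative (\<lambda>v. D1 v x)) (at x)" "\<forall>v. (\<lambda>x. D1 v x) \<in> alg"
    by blast
  have "((\<lambda>x. H n (f x)) has_derivative (\<lambda>v. H' n (f x) * D1 v x)) (at x)" for x
  proof -
    have "((H n) \<circ> f has_derivative (\<lambda>v. H' n (f x) * v) \<circ> (\<lambda>v. D1 v x)) (at x)"
      by (rule diff_chain_at) (use d1 H_deriv[unfolded has_field_derivative_def] in auto)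
    then show ?thesis by (simp add: o_def)
  qed
  then show ?case
    by (intro exI[of _ "\<lambda>v x. H' n (f x) * D1 v x"])
       (use d1 comp H'_alg in \<open>auto intro!: alg.intros\<close>)
qed

lemma alg_smooth: "f \<in> alg \<Longrightarrow> smooth_fun f"
proof (coinduction arbitrary: f rule: smooth_fun.coinduct)
  case (smooth_fun f)
  then obtain D where d: "\<forall>x. (f has_derivative (\<lambda>v. D v x)) (at x)" "\<forall>v. (\<lambda>x. D v x) \<in> alg"
    using alg_deriv by blast
  have fd: "frechet_derivative f (at x) = (\<lambda>v. D v x)" for x
    using d(1) frechet_derivative_at by metis
  show ?case
    using d by (auto simp: fd differentiable_def)
qed

lemma smooth_scale: "smooth_fun f \<Longrightarrow> smooth_fun (\<lambda>x. t * f (c *\<^sub>R x))"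
proof (coinduction arbitrary: f t c rule: smooth_fun.coinduct)
  case (smooth_fun f t c)
  from smooth_fun.cases[OF smooth_fun] have diff: "\<forall>x. f differentiable (at x)"
    and sm: "\<forall>b\<in>Basis. smooth_fun (\<lambda>x. frechet_derivative f (at x) b)" by blast+
  have hd: "((\<lambda>x. t * f (c *\<^sub>R x)) has_derivative
      (\<lambda>v. (t * c) * frechet_derivative f (at (c *\<^sub>R x)) v)) (at x)" for x
  proof -
    have lf: "linear (frechet_derivative f (at (c *\<^sub>R x)))"
      using diff frechet_derivative_works has_derivative_linear by blast
    have "(f \<circ> (\<lambda>x. c *\<^sub>R x) has_derivative frechet_derivative f (at (c *\<^sub>R x)) \<circ> (\<lambda>v. c *\<^sub>R v)) (at x)"
      by (rule diff_chain_at) (auto intro!: derivative_eq_intros simp: diff frechet_derivative_works[symmetric])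
    then have "((\<lambda>x. f (c *\<^sub>R x)) has_derivative (\<lambda>v. c * frechet_derivative f (at (c *\<^sub>R x)) v)) (at x)"
      using linear.scaleR[OF lf] by (simp add: o_def)
    from has_derivative_mult_right[OF this, of t] show ?thesis by (simp add: algebra_simps)
  qed
  have fd: "frechet_derivative (\<lambda>x. t * f (c *\<^sub>R x)) (at x) = (\<lambda>v. (t * c) * frechet_derivative f (at (c *\<^sub>R x)) v)" for x
    using hd frechet_derivative_at by metis
  show ?case
  proof (rule exI[of _ "\<lambda>x. t * f (c *\<^sub>R x)"], intro conjI refl ballI allI)
    show "(\<lambda>x. t * f (c *\<^sub>R x)) differentiable at x" for x using hd by (auto simp: differentiable_def)
    fix b :: 'a assume b: "b \<in> Basis"
    show "(\<exists>f' t' c'. (\<lambda>x. frechet_derivative (\<lambda>x. t * f (c *\<^sub>R x)) (at x) b) = (\<lambda>x. t' * f' (c' *\<^sub>R x)) \<and> smooth_fun f') \<or> smooth_fun (\<lambda>x. frechet_derivative (\<lambda>x. t * f (c *\<^sub>R x)) (at x) b)"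
      by (rule disjI1, rule exI[of _ "\<lambda>y. frechet_derivative f (at y) b"], rule exI[of _ "t*c"], rule exI[of _ c])
         (use sm b in \<open>auto simp: fd\<close>)
  qed
qed

lemma smooth_diff: "smooth_fun f \<Longrightarrow> f differentiable (at x)"
  by (erule smooth_fun.cases) auto

lemma smooth_cont: "smooth_fun f \<Longrightarrow> continuous_on UNIV f"
  by (metis continuous_at_imp_continuous_on differentiable_imp_continuous_within smooth_diff)

lemma smooth_pd: "smooth_fun f \<Longrightarrow> b \<in> Basis \<Longrightarrow> smooth_fun (\<lambda>x. frechet_derivative f (at x) b)"
  by (erule smooth_fun.cases) auto

lemma smooth_grad_cont: "smooth_fun f \<Longrightarrow> continuous_on UNIV (grad f)"
  unfolding grad_def
  by (intro continuous_intros continuous_on_scaleR smooth_cont smooth_pd) auto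

lemma fd_grad:
  assumes "f differentiable (at x)"
  shows "frechet_derivative f (at x) v = grad f x \<bullet> v"
proof -
  have lf: "linear (frechet_derivative f (at x))"
    using assms frechet_derivative_works has_derivative_linear by blast
  have "frechet_derivative f (at x) v = frechet_derivative f (at x) (\<Sum>b\<in>Basis. (v \<bullet> b) *\<^sub>R b)"
    by (simp add: euclidean_representation)
  also have "\<dots> = (\<Sum>b\<in>Basis. (v \<bullet> b) * frechet_derivative f (at x) b)"
    by (simp add: linear_sum[OF lf] linear.scaleR[OF lf])
  also have "\<dots> = grad f x \<bullet> v"
    by (simp add: grad_def inner_sum_right inner_commute algebra_simps)
  finally show ?thesis .
qed

lemma scale_fd:
  assumes diff: "\<forall>x. f differentiable (at x)"
  shows "frechet_derivative (\<lambda>x. t * f (c *\<^sub>R x)) (at x) = (\<lambda>v. (t * c) * frechet_derivative f (at (c *\<^sub>R x)) v)"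
proof -
  have lf: "linear (frechet_derivative f (at (c *\<^sub>R x)))"
    using diff frechet_derivative_works has_derivative_linear by blast
  have "(f \<circ> (\<lambda>x. c *\<^sub>R x) has_derivative frechet_derivative f (at (c *\<^sub>R x)) \<circ> (\<lambda>v. c *\<^sub>R v)) (at x)"
    by (rule diff_chain_at[OF _ frechet_derivative_works[THEN iffD1, OF diff[rule_format]]])
       (auto intro!: derivative_eq_intros)
  then have "((\<lambda>x. f (c *\<^sub>R x)) has_derivative (\<lambda>v. c * frechet_derivative f (at (c *\<^sub>R x)) v)) (at x)"
    using linear.scaleR[OF lf] by (simp add: o_def)
  from has_derivative_mult_right[OF this, of t]
  have "((\<lambda>x. t * f (c *\<^sub>R x)) has_derivative (\<lambda>v. (t * c) * frechet_derivative f (at (c *\<^sub>R x)) v)) (at x)"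
    by (simp add: algebra_simps)
  then show ?thesis by (rule frechet_derivative_at[symmetric])
qed

lemma grad_scale:
  assumes diff: "\<forall>x. f differentiable (at x)"
  shows "grad (\<lambda>x. t * f (c *\<^sub>R x)) x = (t * c) *\<^sub>R grad f (c *\<^sub>R x)"
proof -
  have e: "frechet_derivative (\<lambda>x. t * f (c *\<^sub>R x)) (at x) b = (t * c) * frechet_derivative f (at (c *\<^sub>R x)) b" for b
    using scale_fd[OF diff, of t c x] by simp
  show ?thesis unfolding grad_def e by (simp add: scaleR_sum_right)
qed

lemma grad_outside:
  assumes "x \<notin> closure {x. f x \<noteq> 0}"
  shows "grad f x = 0"
proof -
  let ?U = "- closure {x. f x \<noteq> 0}"
  have "((\<lambda>x. 0::real) has_derivative (\<lambda>v. 0)) (at x)" by simp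
  then have "(f has_derivative (\<lambda>v. 0)) (at x)"
    by (rule has_derivative_transform_within_open[of _ _ _ _ ?U])
       (use assms closure_subset[of "{x. f x \<noteq> 0}"] in auto)
  note fd = frechet_derivative_at[OF this, symmetric]
  show ?thesis unfolding grad_def fd by simp
qed

lemma outside_zero: "x \<notin> closure {x. f x \<noteq> 0} \<Longrightarrow> f x = 0"
  using closure_subset[of "{x. f x \<noteq> 0}"] by auto

lemma test_fun_scale:
  assumes "test_fun D f" "c \<noteq> 0"
  shows "test_fun ((\<lambda>x. x /\<^sub>R c) ` D) (\<lambda>x. t * f (c *\<^sub>R x))"
proof -
  let ?K = "closure {x. f x \<noteq> 0}"
  have K: "compact ?K" "?K \<subseteq> D" using assms unfolding test_fun_def by auto
  have cK: "compact ((\<lambda>x. x /\<^sub>R c) ` ?K)"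
    by (intro compact_continuous_image K continuous_intros)
  have sub: "{x. t * f (c *\<^sub>R x) \<noteq> 0} \<subseteq> (\<lambda>x. x /\<^sub>R c) ` ?K"
  proof
    fix x assume "x \<in> {x. t * f (c *\<^sub>R x) \<noteq> 0}"
    then have "c *\<^sub>R x \<in> ?K" by (intro closure_subset[THEN subsetD]) simp
    then show "x \<in> (\<lambda>x. x /\<^sub>R c) ` ?K" by (rule image_eqI[rotated]) (use assms(2) in simp)
  qed
  have cl: "closure {x. t * f (c *\<^sub>R x) \<noteq> 0} \<subseteq> (\<lambda>x. x /\<^sub>R c) ` ?K"
    by (rule closure_minimal[OF sub compact_imp_closed[OF cK]])
  show ?thesis unfolding test_fun_def
  proof (intro conjI)
    show "smooth_fun (\<lambda>x. t * f (c *\<^sub>R x))" using smooth_scale[of f t c] assms by (simp add: test_fun_def)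
    show "compact (closure {x. t * f (c *\<^sub>R x) \<noteq> 0})"
      using bounded_subset[OF compact_imp_bounded[OF cK] sub] by (simp only: compact_closure)
    show "closure {x. t * f (c *\<^sub>R x) \<noteq> 0} \<subseteq> (\<lambda>x. x /\<^sub>R c) ` D"
      using cl image_mono[OF K(2)] by (rule subset_trans)
  qed
qed

lemma nn_scale:
  fixes f :: "'a::euclidean_space \<Rightarrow> ennreal"
  assumes [measurable]: "f \<in> borel_measurable borel" and c: "c \<noteq> 0"
  shows "(\<integral>\<^sup>+x. f x \<partial>lborel) = ennreal (\<bar>c\<bar>^DIM('a)) * (\<integral>\<^sup>+x. f (c *\<^sub>R x) \<partial>lborel)"
  by (subst lborel_affine[OF c, of 0])
     (simp add: nn_integral_density nn_integral_distr nn_integral_cmult)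

lemma smooth_meas: "smooth_fun f \<Longrightarrow> f \<in> borel_measurable lborel"
  unfolding measurable_lborel2 by (rule borel_measurable_continuous_onI[OF smooth_cont])

lemma smooth_grad_meas: "smooth_fun f \<Longrightarrow> grad f \<in> borel_measurable lborel"
  unfolding measurable_lborel2 by (rule borel_measurable_continuous_onI[OF smooth_grad_cont])

lemma test_W12:
  assumes t: "test_fun D f"
  shows "(f, grad f) \<in> W12 D"
proof -
  let ?K = "closure {x. f x \<noteq> 0}"
  have sm: "smooth_fun f" and K: "compact ?K" "?K \<subseteq> D" using t by (auto simp: test_fun_def)
  have i1: "integrable lborel (\<lambda>x. indicator ?K x *\<^sub>R (f x)\<^sup>2)"
    by (rule borel_integrable_compact[OF K(1)])
       (intro continuous_intros continuous_on_subset[OF smooth_cont[OF sm]]; simp)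
  have i2: "integrable lborel (\<lambda>x. indicator ?K x *\<^sub>R (norm (grad f x))\<^sup>2)"
    by (rule borel_integrable_compact[OF K(1)])
       (intro continuous_intros continuous_on_subset[OF smooth_grad_cont[OF sm]]; simp)
  have e1: "indicator D x *\<^sub>R (f x)\<^sup>2 = indicator ?K x *\<^sub>R (f x)\<^sup>2" for x
    using K(2) outside_zero[of x f] by (auto simp: indicator_def)
  have e2: "indicator D x *\<^sub>R (norm (grad f x))\<^sup>2 = indicator ?K x *\<^sub>R (norm (grad f x))\<^sup>2" for x
    using K(2) grad_outside[of x f] by (auto simp: indicator_def)
  show ?thesis
    unfolding W12_def
  proof (clarify, intro conjI)
    show "set_integrable lborel D (\<lambda>x. (f x)\<^sup>2)" unfolding set_integrable_def e1 by (rule i1)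
    show "set_integrable lborel D (\<lambda>x. (norm (grad f x))\<^sup>2)" unfolding set_integrable_def e2 by (rule i2)
    show "\<exists>\<phi>. (\<forall>k. test_fun D (\<phi> k)) \<and>
         (\<lambda>k. \<integral>\<^sup>+x\<in>D. ennreal ((\<phi> k x - f x)\<^sup>2)\<partial>lborel) \<longlonglongrightarrow> 0 \<and>
         (\<lambda>k. \<integral>\<^sup>+x\<in>D. ennreal ((norm (grad (\<phi> k) x - grad f x))\<^sup>2)\<partial>lborel) \<longlonglongrightarrow> 0"
      by (rule exI[of _ "\<lambda>k. f"]) (use t in simp)
  qed (use smooth_meas[OF sm] smooth_grad_meas[OF sm] in auto)
qed

lemma set_int_ennreal:
  assumes "set_integrable lborel D h" "\<And>x. h x \<ge> 0"
  shows "ennreal (set_lebesgue_integral lborel D h) = (\<integral>\<^sup>+x. ennreal (h x) * indicator D x \<partial>lborel)"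
    and "set_lebesgue_integral lborel D h \<ge> 0"
proof -
  have i: "integrable lborel (\<lambda>x. indicator D x *\<^sub>R h x)" using assms(1) by (simp add: set_integrable_def)
  have "(\<integral>\<^sup>+x. ennreal (indicator D x *\<^sub>R h x) \<partial>lborel) = ennreal (integral\<^sup>L lborel (\<lambda>x. indicator D x *\<^sub>R h x))"
    by (rule nn_integral_eq_integral[OF i]) (use assms(2) in \<open>auto simp: indicator_def\<close>)
  moreover have "(\<integral>\<^sup>+x. ennreal (indicator D x *\<^sub>R h x) \<partial>lborel) = (\<integral>\<^sup>+x. ennreal (h x) * indicator D x \<partial>lborel)"
    by (rule nn_integral_cong) (simp split: split_indicator)
  ultimately show "ennreal (set_lebesgue_integral lborel D h) = (\<integral>\<^sup>+x. ennreal (h x) * indicator D x \<partial>lborel)"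
    by (simp add: set_lebesgue_integral_def)
  show "set_lebesgue_integral lborel D h \<ge> 0"
    unfolding set_lebesgue_integral_def using assms(2) by (intro integral_nonneg_AE) (auto simp: indicator_def)
qed

lemma Gset_L2_le1: "(g, G) \<in> Gset D \<Longrightarrow> L2sq D g \<le> 1"
proof -
  assume a: "(g, G) \<in> Gset D"
  then have "set_integrable lborel D (\<lambda>x. (norm (G x))\<^sup>2)" by (auto simp: Gset_def W12_def)
  from set_int_ennreal(2)[OF this] have "L2sq_vec D G \<ge> 0" by (simp add: L2sq_vec_def)
  with a show ?thesis by (auto simp: Gset_def)
qed

definition bump :: "'a::euclidean_space \<Rightarrow> real" where "bump x = H 0 (1 - x \<bullet> x)"

lemma bump_alg: "bump \<in> alg"
proof -
  have "(\<lambda>x::'a. H 0 ((\<lambda>x. 1) x + (\<lambda>x. -1) x * (x \<bullet> x))) \<in> alg"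
    by (intro alg.intros)
  then show ?thesis by (simp add: bump_def[abs_def])
qed

lemma bump_smooth: "smooth_fun bump" by (rule alg_smooth[OF bump_alg])

lemma bump_nz: "bump x \<noteq> 0 \<longleftrightarrow> norm x < 1"
proof -
  have "x \<bullet> x = (norm x)^2" by (simp add: power2_norm_eq_inner)
  moreover have "(norm x)^2 < 1 \<longleftrightarrow> norm x < 1"
    by (metis abs_norm_cancel power_less_one_iff norm_ge_zero one_less_power pos2 power2_eq_1_iff less_le_not_le nle_le not_less zero_less_one_class.zero_le_one power_le_one)
  ultimately show ?thesis by (simp add: bump_def H_def)
qed

lemma cball_cube: "0 < s \<Longrightarrow> s < r \<Longrightarrow> cball 0 s \<subseteq> (cube r :: 'a::euclidean_space set)"
proof
  fix x :: 'a assume "0 < s" "s < r" "x \<in> cball 0 s"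
  then have "norm x \<le> s" by simp
  then have "- r < x \<bullet> i \<and> x \<bullet> i < r" if "i \<in> Basis" for i
    using Basis_le_norm[OF that, of x] \<open>s < r\<close> unfolding abs_le_iff by linarith
  then show "x \<in> cube r" unfolding cube_def mem_box
    by (auto simp: inner_simps)
qed

lemma bumps_supp: "0 < s \<Longrightarrow> closure {x. a * bump ((1/s) *\<^sub>R x) \<noteq> 0} \<subseteq> cball (0::'a::euclidean_space) s"
proof -
  assume s: "0 < s"
  have "{x. a * bump ((1/s) *\<^sub>R x) \<noteq> 0} \<subseteq> cball (0::'a) s"
  proof
    fix x :: 'a assume "x \<in> {x. a * bump ((1/s) *\<^sub>R x) \<noteq> 0}"
    then have "bump ((1/s) *\<^sub>R x) \<noteq> 0" by auto
    then have "norm ((1/s) *\<^sub>R x) < 1" by (simp only: bump_nz)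
    then have "norm x / s < 1" using s by simp
    then show "x \<in> cball 0 s" using s by (simp add: field_simps)
  qed
  then show ?thesis by (rule closure_minimal) simp
qed

lemma bumps_test: "0 < s \<Longrightarrow> s < r \<Longrightarrow> test_fun (cube r) (\<lambda>x. a * bump ((1/s) *\<^sub>R x))"
  unfolding test_fun_def
proof (intro conjI)
  assume s: "0 < s" "s < r"
  show "smooth_fun (\<lambda>x::'a. a * bump ((1/s) *\<^sub>R x))" by (rule smooth_scale[OF bump_smooth])
  show "compact (closure {x::'a. a * bump ((1/s) *\<^sub>R x) \<noteq> 0})"
    using bounded_subset[OF bounded_cball subset_trans[OF closure_subset bumps_supp[OF s(1)]]]
    by (simp only: compact_closure)
  show "closure {x::'a. a * bump ((1/s) *\<^sub>R x) \<noteq> 0} \<subseteq> cube r"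
    using bumps_supp[OF s(1)] cball_cube[OF s] by (rule subset_trans)
qed

lemma bump_test: "test_fun UNIV (bump :: 'a::euclidean_space \<Rightarrow> real)"
  using bumps_test[of 1 2 1, where 'a='a] unfolding test_fun_def by simp

lemma bump_meas[measurable]: "bump \<in> borel_measurable borel"
  using smooth_meas[OF bump_smooth] by simp
lemma gbump_meas[measurable]: "grad bump \<in> borel_measurable borel"
  using smooth_grad_meas[OF bump_smooth] by simp

lemma nn_ind_drop:
  assumes "\<And>x. x \<notin> D \<Longrightarrow> F x = 0"
  shows "(\<integral>\<^sup>+x. F x * indicator D x \<partial>lborel) = (\<integral>\<^sup>+x. F x \<partial>lborel)"
  by (rule nn_integral_cong) (use assms in \<open>auto split: split_indicator\<close>)

definition A0 :: "'a::euclidean_space itself \<Rightarrow> real" where "A0 _ = L2sq UNIV (bump :: 'a \<Rightarrow> real)"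
definition B0 :: "'a::euclidean_space itself \<Rightarrow> real" where "B0 _ = L2sq_vec UNIV (grad (bump :: 'a \<Rightarrow> real))"

lemma A0_nn: "ennreal (A0 TYPE('a::euclidean_space)) = (\<integral>\<^sup>+x. ennreal ((bump (x::'a))\<^sup>2) \<partial>lborel)"
  and A0_pos: "A0 TYPE('a) \<ge> 0"
proof -
  have "(bump::'a\<Rightarrow>real, grad bump) \<in> W12 UNIV" by (rule test_W12[OF bump_test])
  then have i: "set_integrable lborel UNIV (\<lambda>x::'a. (bump x)\<^sup>2)" by (simp add: W12_def)
  show "ennreal (A0 TYPE('a::euclidean_space)) = (\<integral>\<^sup>+x. ennreal ((bump (x::'a))\<^sup>2) \<partial>lborel)"
    using set_int_ennreal(1)[OF i] by (simp add: A0_def L2sq_def)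
  show "A0 TYPE('a) \<ge> 0"
    using set_int_ennreal(2)[OF i] by (simp add: A0_def L2sq_def)
qed

lemma B0_nn: "ennreal (B0 TYPE('a::euclidean_space)) = (\<integral>\<^sup>+x. ennreal ((norm (grad bump (x::'a)))\<^sup>2) \<partial>lborel)"
  and B0_pos: "B0 TYPE('a) \<ge> 0"
proof -
  have "(bump::'a\<Rightarrow>real, grad bump) \<in> W12 UNIV" by (rule test_W12[OF bump_test])
  then have i: "set_integrable lborel UNIV (\<lambda>x::'a. (norm (grad bump x))\<^sup>2)" by (simp add: W12_def)
  show "ennreal (B0 TYPE('a::euclidean_space)) = (\<integral>\<^sup>+x. ennreal ((norm (grad bump (x::'a)))\<^sup>2) \<partial>lborel)"
    using set_int_ennreal(1)[OF i] by (simp add: B0_def L2sq_vec_def)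
  show "B0 TYPE('a) \<ge> 0"
    using set_int_ennreal(2)[OF i] by (simp add: B0_def L2sq_vec_def)
qed

lemma bumps_vals:
  fixes s r a :: real
  assumes s: "0 < s" "s < r"
  defines "g \<equiv> (\<lambda>x::'a::euclidean_space. a * bump ((1/s) *\<^sub>R x))"
  shows "(g, grad g) \<in> W12 (cube r)"
    and "L2sq (cube r) g = a\<^sup>2 * s^DIM('a) * A0 TYPE('a)"
    and "L2sq_vec (cube r) (grad g) = a\<^sup>2 * s^DIM('a) / s\<^sup>2 * B0 TYPE('a)"
proof -
  have t: "test_fun (cube r) g" unfolding g_def by (rule bumps_test[OF s])
  show W: "(g, grad g) \<in> W12 (cube r)" by (rule test_W12[OF t])
  have supp: "x \<notin> cube r \<Longrightarrow> x \<notin> closure {x. g x \<noteq> 0}" for x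
    using t by (auto simp: test_fun_def)
  have i1: "set_integrable lborel (cube r) (\<lambda>x. (g x)\<^sup>2)"
    and i2: "set_integrable lborel (cube r) (\<lambda>x. (norm (grad g x))\<^sup>2)" using W by (auto simp: W12_def)
  have "ennreal (L2sq (cube r) g) = (\<integral>\<^sup>+x. ennreal ((g x)\<^sup>2) * indicator (cube r) x \<partial>lborel)"
    using set_int_ennreal(1)[OF i1] by (simp add: L2sq_def)
  also have "\<dots> = (\<integral>\<^sup>+x. ennreal ((g x)\<^sup>2) \<partial>lborel)"
    by (rule nn_ind_drop) (use supp outside_zero in auto)
  also have "\<dots> = (\<integral>\<^sup>+x. ennreal (a\<^sup>2) * ennreal ((bump ((1/s) *\<^sub>R (x::'a)))\<^sup>2) \<partial>lborel)"
    by (auto intro!: nn_integral_cong simp: g_def power_mult_distrib ennreal_mult)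
  also have "\<dots> = ennreal (a\<^sup>2) * (\<integral>\<^sup>+x. ennreal ((bump ((1/s) *\<^sub>R (x::'a)))\<^sup>2) \<partial>lborel)"
    by (rule nn_integral_cmult) measurable
  also have "(\<integral>\<^sup>+x. ennreal ((bump ((1/s) *\<^sub>R (x::'a)))\<^sup>2) \<partial>lborel) = ennreal (\<bar>s\<bar>^DIM('a)) * (\<integral>\<^sup>+x. ennreal ((bump ((1/s) *\<^sub>R (s *\<^sub>R (x::'a))))\<^sup>2) \<partial>lborel)"
    by (rule nn_scale[where f="\<lambda>y. ennreal ((bump ((1/s) *\<^sub>R (y::'a)))\<^sup>2)" and c=s]) (use s in auto)
  also have "(\<integral>\<^sup>+x. ennreal ((bump ((1/s) *\<^sub>R (s *\<^sub>R (x::'a))))\<^sup>2) \<partial>lborel) = ennreal (A0 TYPE('a))"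
    using s by (simp add: A0_nn)
  finally have "ennreal (L2sq (cube r) g) = ennreal (a\<^sup>2 * s^DIM('a) * A0 TYPE('a))"
    using s A0_pos[where 'a='a] by (simp add: ennreal_mult[symmetric])
  then show "L2sq (cube r) g = a\<^sup>2 * s^DIM('a) * A0 TYPE('a)"
    using set_int_ennreal(2)[OF i1] s A0_pos[where 'a='a] by (subst (asm) ennreal_inj) (auto simp: L2sq_def)
  have gg: "grad g x = (a * (1/s)) *\<^sub>R grad bump ((1/s) *\<^sub>R x)" for x
    unfolding g_def by (rule grad_scale) (use smooth_diff[OF bump_smooth] in auto)
  have "ennreal (L2sq_vec (cube r) (grad g)) = (\<integral>\<^sup>+x. ennreal ((norm (grad g x))\<^sup>2) * indicator (cube r) x \<partial>lborel)"
    using set_int_ennreal(1)[OF i2] by (simp add: L2sq_vec_def)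
  also have "\<dots> = (\<integral>\<^sup>+x. ennreal ((norm (grad g x))\<^sup>2) \<partial>lborel)"
    by (rule nn_ind_drop) (use supp grad_outside in auto)
  also have "\<dots> = (\<integral>\<^sup>+x. ennreal ((a/s)\<^sup>2) * ennreal ((norm (grad bump ((1/s) *\<^sub>R (x::'a))))\<^sup>2) \<partial>lborel)"
  proof (intro nn_integral_cong)
    fix x :: 'a
    have "(norm (grad g x))\<^sup>2 = (a/s)\<^sup>2 * (norm (grad bump ((1/s) *\<^sub>R x)))\<^sup>2"
      by (simp add: gg power_mult_distrib power_divide)
    then show "ennreal ((norm (grad g x))\<^sup>2) = ennreal ((a/s)\<^sup>2) * ennreal ((norm (grad bump ((1/s) *\<^sub>R x)))\<^sup>2)"
      by (simp add: ennreal_mult)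
  qed
  also have "\<dots> = ennreal ((a/s)\<^sup>2) * (\<integral>\<^sup>+x. ennreal ((norm (grad bump ((1/s) *\<^sub>R (x::'a))))\<^sup>2) \<partial>lborel)"
    by (rule nn_integral_cmult) measurable
  also have "(\<integral>\<^sup>+x. ennreal ((norm (grad bump ((1/s) *\<^sub>R (x::'a))))\<^sup>2) \<partial>lborel) = ennreal (\<bar>s\<bar>^DIM('a)) * (\<integral>\<^sup>+x. ennreal ((norm (grad bump ((1/s) *\<^sub>R (s *\<^sub>R (x::'a)))))\<^sup>2) \<partial>lborel)"
    by (rule nn_scale[where f="\<lambda>y. ennreal ((norm (grad bump ((1/s) *\<^sub>R (y::'a))))\<^sup>2)" and c=s]) (use s in auto)
  also have "(\<integral>\<^sup>+x. ennreal ((norm (grad bump ((1/s) *\<^sub>R (s *\<^sub>R (x::'a)))))\<^sup>2) \<partial>lborel) = ennreal (B0 TYPE('a))"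
    using s by (simp add: B0_nn)
  finally have "ennreal (L2sq_vec (cube r) (grad g)) = ennreal (a\<^sup>2 * s^DIM('a) / s\<^sup>2 * B0 TYPE('a))"
    using s B0_pos[where 'a='a] by (simp add: ennreal_mult[symmetric] power_divide)
  then show "L2sq_vec (cube r) (grad g) = a\<^sup>2 * s^DIM('a) / s\<^sup>2 * B0 TYPE('a)"
    using set_int_ennreal(2)[OF i2] s B0_pos[where 'a='a] by (subst (asm) ennreal_inj) (auto simp: L2sq_vec_def)
qed

lemma A0_gt: "A0 TYPE('a::euclidean_space) > 0"
proof (rule ccontr)
  assume "\<not> A0 TYPE('a) > 0"
  then have "A0 TYPE('a) = 0" using A0_pos[where 'a='a] by linarith
  then have "(\<integral>\<^sup>+x. ennreal ((bump (x::'a))\<^sup>2) \<partial>lborel) = 0" using A0_nn[where 'a='a] by simp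
  then have "AE x in lborel. ennreal ((bump (x::'a))\<^sup>2) = 0"
    by (subst (asm) nn_integral_0_iff_AE) auto
  then have "AE x in lborel. (x::'a) \<notin> ball 0 1"
    by (rule AE_mp) (auto intro!: AE_I2 simp: bump_nz[symmetric])
  then have "emeasure lborel (ball (0::'a) 1) = 0"
    by (subst (asm) AE_iff_measurable[of "ball 0 1"]) auto
  moreover have "measure lborel (ball (0::'a) 1) > 0" using content_ball_gt_0_iff[of "0::'a" 1] by simp
  ultimately show False by (simp add: measure_def)
qed

lemma part1_lower:
  assumes r: "0 < r"
  shows "ennreal (A0 TYPE('a) / (A0 TYPE('a) + B0 TYPE('a) / (2 * (r/2)\<^sup>2)))
     \<le> Sup ((\<lambda>(g, G). ennreal (L2sq (cube r) g)) ` Gset (cube r :: 'a::euclidean_space set))"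
proof -
  define s where "s = r/2"
  have s: "0 < s" "s < r" using r by (auto simp: s_def)
  define A where "A = A0 TYPE('a)"
  define B where "B = B0 TYPE('a)"
  have A: "A > 0" using A0_gt[where 'a='a] by (simp add: A_def)
  have B: "B \<ge> 0" using B0_pos[where 'a='a] by (simp add: B_def)
  define K where "K = s^DIM('a) * (A + B / (2 * s\<^sup>2))"
  have K: "K > 0" using s A B by (auto simp: K_def intro!: mult_pos_pos add_pos_nonneg)
  define a where "a = sqrt (1 / K)"
  have a2: "a\<^sup>2 = 1 / K" using K by (simp add: a_def)
  define g where "g = (\<lambda>x::'a. a * bump ((1/s) *\<^sub>R x))"
  note v = bumps_vals[where 'a='a, OF s, of a, folded g_def]
  have "L2sq (cube r) g = a\<^sup>2 * s^DIM('a) * A" using v(2) by (simp add: A_def)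
  also have "\<dots> = s^DIM('a) * A / K" using a2 by simp
  also have "\<dots> = A / (A + B / (2 * s\<^sup>2))" unfolding K_def using s by simp
  finally have L: "L2sq (cube r) g = A / (A + B / (2 * s\<^sup>2))" .
  have "L2sq (cube r) g + 1/2 * L2sq_vec (cube r) (grad g) = a\<^sup>2 * K"
    using v(2,3) s by (simp add: A_def B_def K_def field_simps power2_eq_square)
  also have "\<dots> = 1" using a2 K by simp
  finally have "(g, grad g) \<in> Gset (cube r)" using v(1) by (simp add: Gset_def)
  then have "ennreal (L2sq (cube r) g) \<le> Sup ((\<lambda>(g, G). ennreal (L2sq (cube r) g)) ` Gset (cube r :: 'a set))"
    by (intro Sup_upper) force
  then show ?thesis using L by (simp add: A_def B_def s_def)
qed

lemma part1:
  "((\<lambda>r. Sup ((\<lambda>(g, G). ennreal (L2sq (cube r) g)) ` Gset (cube r :: 'a::euclidean_space set)))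
            \<longlongrightarrow> 1) at_top"
proof (rule tendsto_sandwich[of "\<lambda>r. ennreal (A0 TYPE('a) / (A0 TYPE('a) + B0 TYPE('a) / (2 * (r/2)\<^sup>2)))" _ _ "\<lambda>r. 1"])
  show "\<forall>\<^sub>F r in at_top. ennreal (A0 TYPE('a) / (A0 TYPE('a) + B0 TYPE('a) / (2 * (r/2)\<^sup>2)))
     \<le> Sup ((\<lambda>(g, G). ennreal (L2sq (cube r) g)) ` Gset (cube r :: 'a set))"
    using eventually_gt_at_top[of "0::real"] by eventually_elim (rule part1_lower)
  show "\<forall>\<^sub>F r in at_top. Sup ((\<lambda>(g, G). ennreal (L2sq (cube r) g)) ` Gset (cube r :: 'a set)) \<le> 1"
    by (intro always_eventually allI Sup_least) (auto intro!: ennreal_leI dest: Gset_L2_le1)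
  show "((\<lambda>r. 1) \<longlongrightarrow> (1::ennreal)) at_top" by simp
  have lim0: "((\<lambda>r::real. B0 TYPE('a) / (2 * (r/2)\<^sup>2)) \<longlongrightarrow> 0) at_top"
    by (rule tendsto_divide_0[OF tendsto_const]) (rule filterlim_at_top_imp_at_infinity, real_asymp)
  have "((\<lambda>r::real. A0 TYPE('a) / (A0 TYPE('a) + B0 TYPE('a) / (2 * (r/2)\<^sup>2))) \<longlongrightarrow> A0 TYPE('a) / (A0 TYPE('a) + 0)) at_top"
    by (intro tendsto_intros lim0) (use A0_gt[where 'a='a] in simp)
  then have "((\<lambda>r::real. A0 TYPE('a) / (A0 TYPE('a) + B0 TYPE('a) / (2 * (r/2)\<^sup>2))) \<longlongrightarrow> 1) at_top"
    using A0_gt[where 'a='a] by simp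
  then show "((\<lambda>r. ennreal (A0 TYPE('a) / (A0 TYPE('a) + B0 TYPE('a) / (2 * (r/2)\<^sup>2)))) \<longlongrightarrow> 1) at_top"
    by (metis ennreal_1 tendsto_ennrealI)
qed

definition NI :: "real \<Rightarrow> 'a::euclidean_space set \<Rightarrow> ('a \<Rightarrow> real) \<Rightarrow> ennreal" where
  "NI p D g = (\<integral>\<^sup>+x. ennreal ((g x)\<^sup>2 * norm x powr (- p)) * indicator D x \<partial>lborel)"

lemma hardy_sup_NI: "hardy_sup D p = Sup ((\<lambda>(g, G). NI p D g) ` Gset D)"
  by (simp add: hardy_sup_def NI_def)

lemma test_fun_mono: "test_fun D f \<Longrightarrow> D \<subseteq> E \<Longrightarrow> test_fun E f"
  by (auto simp: test_fun_def)

lemma test_outside: "test_fun D f \<Longrightarrow> x \<notin> D \<Longrightarrow> f x = 0 \<and> grad f x = 0"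
proof -
  assume "test_fun D f" "x \<notin> D"
  then have "x \<notin> closure {x. f x \<noteq> 0}" by (auto simp: test_fun_def)
  then show ?thesis using outside_zero[of x f] grad_outside[of x f] by simp
qed

lemma extend:
  assumes W: "(g, G) \<in> W12 D" and D: "open D" and DE: "D \<subseteq> E"
  defines "g' \<equiv> (\<lambda>x. indicator D x * g x)" and "G' \<equiv> (\<lambda>x. indicator D x *\<^sub>R G x)"
  shows "(g', G') \<in> W12 E" "L2sq E g' = L2sq D g" "L2sq_vec E G' = L2sq_vec D G" "NI p E g' = NI p D g"
proof -
  have Db[measurable]: "D \<in> sets borel" using D by simp
  from W have gm[measurable]: "g \<in> borel_measurable borel" and Gm[measurable]: "G \<in> borel_measurable borel"
    and i1: "set_integrable lborel D (\<lambda>x. (g x)\<^sup>2)" and i2: "set_integrable lborel D (\<lambda>x. (norm (G x))\<^sup>2)"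
    by (auto simp: W12_def)
  from W obtain \<phi> where t: "\<And>k. test_fun D (\<phi> k)"
    and c1: "(\<lambda>k. \<integral>\<^sup>+x\<in>D. ennreal ((\<phi> k x - g x)\<^sup>2)\<partial>lborel) \<longlonglongrightarrow> 0"
    and c2: "(\<lambda>k. \<integral>\<^sup>+x\<in>D. ennreal ((norm (grad (\<phi> k) x - G x))\<^sup>2)\<partial>lborel) \<longlonglongrightarrow> 0"
    by (auto simp: W12_def)
  have e1: "indicator E x *\<^sub>R (g' x)\<^sup>2 = indicator D x *\<^sub>R (g x)\<^sup>2" for x
    using DE by (auto simp: g'_def indicator_def)
  have e2: "indicator E x *\<^sub>R (norm (G' x))\<^sup>2 = indicator D x *\<^sub>R (norm (G x))\<^sup>2" for x
    using DE by (auto simp: G'_def indicator_def)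
  have e3: "(\<integral>\<^sup>+x\<in>E. ennreal ((\<phi> k x - g' x)\<^sup>2)\<partial>lborel) = (\<integral>\<^sup>+x\<in>D. ennreal ((\<phi> k x - g x)\<^sup>2)\<partial>lborel)" for k
    by (rule nn_integral_cong) (use DE test_outside[OF t] in \<open>auto simp: g'_def indicator_def\<close>)
  have e4: "(\<integral>\<^sup>+x\<in>E. ennreal ((norm (grad (\<phi> k) x - G' x))\<^sup>2)\<partial>lborel) = (\<integral>\<^sup>+x\<in>D. ennreal ((norm (grad (\<phi> k) x - G x))\<^sup>2)\<partial>lborel)" for k
    by (rule nn_integral_cong) (use DE test_outside[OF t] in \<open>auto simp: G'_def indicator_def\<close>)
  show "(g', G') \<in> W12 E"
    unfolding W12_def
  proof (clarify, intro conjI)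
    show "g' \<in> borel_measurable lborel" "G' \<in> borel_measurable lborel" unfolding g'_def G'_def by measurable
    show "set_integrable lborel E (\<lambda>x. (g' x)\<^sup>2)" using i1 unfolding set_integrable_def e1 .
    show "set_integrable lborel E (\<lambda>x. (norm (G' x))\<^sup>2)" using i2 unfolding set_integrable_def e2 .
    show "\<exists>\<phi>. (\<forall>k. test_fun E (\<phi> k)) \<and>
         (\<lambda>k. \<integral>\<^sup>+x\<in>E. ennreal ((\<phi> k x - g' x)\<^sup>2)\<partial>lborel) \<longlonglongrightarrow> 0 \<and>
         (\<lambda>k. \<integral>\<^sup>+x\<in>E. ennreal ((norm (grad (\<phi> k) x - G' x))\<^sup>2)\<partial>lborel) \<longlonglongrightarrow> 0"
      by (rule exI[of _ \<phi>]) (use t test_fun_mono DE c1 c2 e3 e4 in auto)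
  qed
  show "L2sq E g' = L2sq D g" unfolding L2sq_def set_lebesgue_integral_def e1 ..
  show "L2sq_vec E G' = L2sq_vec D G" unfolding L2sq_vec_def set_lebesgue_integral_def e2 ..
  show "NI p E g' = NI p D g" unfolding NI_def
    by (rule nn_integral_cong) (use DE in \<open>auto simp: g'_def indicator_def\<close>)
qed

lemma hardy_mono:
  assumes D: "open D" and DE: "D \<subseteq> E"
  shows "hardy_sup D p \<le> hardy_sup E p"
  unfolding hardy_sup_NI
proof (rule Sup_least, clarify)
  fix g G assume "(g, G) \<in> Gset D"
  then have W: "(g, G) \<in> W12 D" and n: "L2sq D g + 1/2 * L2sq_vec D G = 1" by (auto simp: Gset_def)
  note e = extend[OF W D DE]
  have "((\<lambda>x. indicator D x * g x), (\<lambda>x. indicator D x *\<^sub>R G x)) \<in> Gset E"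
    using e(1,2,3) n by (simp add: Gset_def)
  then have "NI p E (\<lambda>x. indicator D x * g x) \<le> Sup ((\<lambda>(g, G). NI p E g) ` Gset E)"
    by (intro Sup_upper) force
  then show "NI p D g \<le> Sup ((\<lambda>(g, G). NI p E g) ` Gset E)" using e(4) by simp
qed

lemma cube_mono: "r \<le> r' \<Longrightarrow> cube r \<subseteq> cube r'"
  unfolding cube_def by (auto simp: mem_box inner_simps) (smt (verit))+

lemma open_cube: "open (cube r)" unfolding cube_def by (rule open_box)

lemma test_in_cube: "test_fun UNIV f \<Longrightarrow> \<exists>r>0. test_fun (cube r) f"
proof -
  assume t: "test_fun UNIV f"
  then have "bounded (closure {x. f x \<noteq> 0})" by (auto simp: test_fun_def compact_imp_bounded)
  then obtain b where b: "b > 0" "\<And>x. x \<in> closure {x. f x \<noteq> 0} \<Longrightarrow> norm x \<le> b"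
    unfolding bounded_pos by blast
  have "closure {x. f x \<noteq> 0} \<subseteq> cball 0 b" using b by auto
  also have "\<dots> \<subseteq> cube (b+1)" by (rule cball_cube) (use b in auto)
  finally show ?thesis using t b by (intro exI[of _ "b+1"]) (auto simp: test_fun_def)
qed

lemma test_fun_cmult: "test_fun D f \<Longrightarrow> test_fun D (\<lambda>x. t * f x)"
  using test_fun_scale[of D f 1 t] by simp

lemma grad_cmult: "\<forall>x. f differentiable (at x) \<Longrightarrow> grad (\<lambda>x. t * f x) x = t *\<^sub>R grad f x"
  using grad_scale[of f t 1 x] by simp

lemma powr_meas[measurable]: "(\<lambda>x::'a::euclidean_space. norm x powr (- p)) \<in> borel_measurable borel"
  by measurable

lemma norm_test:
  fixes f :: "'a::euclidean_space \<Rightarrow> real"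
  assumes t: "test_fun (cube r) f"
    and N: "N = L2sq UNIV f + 1/2 * L2sq_vec UNIV (grad f)" "N > 0"
  shows "NI p UNIV f \<le> ennreal N * hardy_sup (cube r :: 'a set) p"
proof -
  have sm: "smooth_fun f" using t by (simp add: test_fun_def)
  have fm[measurable]: "f \<in> borel_measurable borel" using smooth_meas[OF sm] by simp
  define c where "c = 1 / sqrt N"
  have c: "c > 0" "c\<^sup>2 = 1/N" using N by (auto simp: c_def power_divide)
  define h where "h = (\<lambda>x. c * f x)"
  have th: "test_fun (cube r) h" unfolding h_def by (rule test_fun_cmult[OF t])
  have gh: "grad h x = c *\<^sub>R grad f x" for x unfolding h_def
    by (rule grad_cmult) (use smooth_diff[OF sm] in auto)
  have out: "x \<notin> cube r \<Longrightarrow> f x = 0 \<and> grad f x = 0" for x by (rule test_outside[OF t])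
  have e1: "indicator (cube r) x *\<^sub>R (h x)\<^sup>2 = c\<^sup>2 * (indicator UNIV x *\<^sub>R (f x)\<^sup>2)" for x
    using out[of x] by (auto simp: h_def indicator_def power_mult_distrib)
  have e2: "indicator (cube r) x *\<^sub>R (norm (grad h x))\<^sup>2 = c\<^sup>2 * (indicator UNIV x *\<^sub>R (norm (grad f x))\<^sup>2)" for x
    using out[of x] c by (auto simp: gh indicator_def power_mult_distrib)
  have L1: "L2sq (cube r) h = c\<^sup>2 * L2sq UNIV f"
    unfolding L2sq_def set_lebesgue_integral_def e1 by (rule integral_mult_right_zero)
  have L2: "L2sq_vec (cube r) (grad h) = c\<^sup>2 * L2sq_vec UNIV (grad f)"
    unfolding L2sq_vec_def set_lebesgue_integral_def e2 by (rule integral_mult_right_zero)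
  have "L2sq (cube r) h + 1/2 * L2sq_vec (cube r) (grad h) = c\<^sup>2 * N"
    using L1 L2 N by (simp add: algebra_simps)
  also have "\<dots> = 1" using c N by simp
  finally have G: "(h, grad h) \<in> Gset (cube r)" using test_W12[OF th] by (simp add: Gset_def)
  have "NI p (cube r) h \<le> hardy_sup (cube r :: 'a set) p"
  proof -
    have "NI p (cube r) h \<in> (\<lambda>(g, G). NI p (cube r) g) ` Gset (cube r :: 'a set)"
      by (rule rev_image_eqI[OF G]) simp
    then show ?thesis unfolding hardy_sup_NI by (intro Sup_upper) simp
  qed
  moreover have "NI p (cube r) h = ennreal (c\<^sup>2) * NI p UNIV f"
    unfolding NI_def
  proof (subst nn_integral_cmult[symmetric])
    show "(\<lambda>x. ennreal ((f x)\<^sup>2 * norm x powr - p) * indicator UNIV x) \<in> borel_measurable lborel"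
      by measurable
    show "(\<integral>\<^sup>+ x. ennreal ((h x)\<^sup>2 * norm x powr - p) * indicator (cube r) x \<partial>lborel) =
      (\<integral>\<^sup>+ x. ennreal (c\<^sup>2) * (ennreal ((f x)\<^sup>2 * norm x powr - p) * indicator UNIV x) \<partial>lborel)"
      by (rule nn_integral_cong) (use out in \<open>auto simp: h_def indicator_def power_mult_distrib ennreal_mult mult.assoc\<close>)
  qed
  ultimately have "ennreal (c\<^sup>2) * NI p UNIV f \<le> hardy_sup (cube r :: 'a set) p" by simp
  then have "ennreal N * (ennreal (c\<^sup>2) * NI p UNIV f) \<le> ennreal N * hardy_sup (cube r :: 'a set) p"
    by (rule mult_left_mono) simp
  moreover have "ennreal N * ennreal (c\<^sup>2) = 1" using c N by (simp add: ennreal_mult[symmetric])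
  ultimately show ?thesis by (simp add: mult.assoc[symmetric])
qed

lemma sq_split:
  fixes a b d :: real assumes "d > 0"
  shows "(a + b)\<^sup>2 \<le> (1 + d) * a\<^sup>2 + (1 + 1/d) * b\<^sup>2"
proof -
  have "0 \<le> (d * a - b)\<^sup>2 / d" using assms by simp
  also have "(d * a - b)\<^sup>2 / d = d * a\<^sup>2 + b\<^sup>2 / d - 2 * a * b"
    using assms by (simp add: power2_eq_square field_simps)
  finally have "2 * a * b \<le> d * a\<^sup>2 + b\<^sup>2 / d" by linarith
  moreover have "(a + b)\<^sup>2 = a\<^sup>2 + 2 * a * b + b\<^sup>2" by (simp add: power2_eq_square algebra_simps)
  moreover have "(1 + d) * a\<^sup>2 + (1 + 1/d) * b\<^sup>2 = a\<^sup>2 + d * a\<^sup>2 + b\<^sup>2 + b\<^sup>2 / d"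
    by (simp add: algebra_simps)
  ultimately show ?thesis by linarith
qed

lemma sq_split_real:
  fixes u v d :: real assumes "d > 0"
  shows "u\<^sup>2 \<le> (1 + d) * v\<^sup>2 + (1 + 1/d) * (u - v)\<^sup>2"
  using sq_split[OF assms, of v "u - v"] by simp

lemma sq_split_norm:
  fixes u v :: "'a::real_normed_vector" and d :: real assumes "d > 0"
  shows "(norm u)\<^sup>2 \<le> (1 + d) * (norm v)\<^sup>2 + (1 + 1/d) * (norm (u - v))\<^sup>2"
proof -
  have "norm u \<le> norm v + norm (u - v)" by (metis add.commute diff_add_cancel norm_triangle_ineq)
  then have "(norm u)\<^sup>2 \<le> (norm v + norm (u - v))\<^sup>2" by (simp add: power_mono)
  also have "\<dots> \<le> (1 + d) * (norm v)\<^sup>2 + (1 + 1/d) * (norm (u - v))\<^sup>2" by (rule sq_split[OF assms])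
  finally show ?thesis .
qed

lemma nn_split:
  fixes F H E :: "'a::euclidean_space \<Rightarrow> real"
  assumes [measurable]: "F \<in> borel_measurable borel" "H \<in> borel_measurable borel" "E \<in> borel_measurable borel"
    and le: "\<And>x. F x \<le> a * H x + b * E x" and nn: "\<And>x. H x \<ge> 0" "\<And>x. E x \<ge> 0" and ab: "a \<ge> 0" "b \<ge> 0"
  shows "(\<integral>\<^sup>+x. ennreal (F x) \<partial>lborel) \<le> ennreal a * (\<integral>\<^sup>+x. ennreal (H x) \<partial>lborel) + ennreal b * (\<integral>\<^sup>+x. ennreal (E x) \<partial>lborel)"
proof -
  have "(\<integral>\<^sup>+x. ennreal (F x) \<partial>lborel) \<le> (\<integral>\<^sup>+x. ennreal a * ennreal (H x) + ennreal b * ennreal (E x) \<partial>lborel)"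
  proof (rule nn_integral_mono)
    fix x
    have "ennreal (F x) \<le> ennreal (a * H x + b * E x)" by (rule ennreal_leI[OF le])
    also have "\<dots> = ennreal a * ennreal (H x) + ennreal b * ennreal (E x)"
      using nn ab by (simp add: ennreal_mult)
    finally show "ennreal (F x) \<le> ennreal a * ennreal (H x) + ennreal b * ennreal (E x)" .
  qed
  also have "\<dots> = ennreal a * (\<integral>\<^sup>+x. ennreal (H x) \<partial>lborel) + ennreal b * (\<integral>\<^sup>+x. ennreal (E x) \<partial>lborel)"
    by (simp add: nn_integral_add nn_integral_cmult)
  finally show ?thesis .
qed

lemma W12_nn:
  assumes "(g, G) \<in> W12 D"
  shows "ennreal (L2sq D g) = (\<integral>\<^sup>+x. ennreal ((g x)\<^sup>2) * indicator D x \<partial>lborel)" "L2sq D g \<ge> 0"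
    "ennreal (L2sq_vec D G) = (\<integral>\<^sup>+x. ennreal ((norm (G x))\<^sup>2) * indicator D x \<partial>lborel)" "L2sq_vec D G \<ge> 0"
proof -
  have i1: "set_integrable lborel D (\<lambda>x. (g x)\<^sup>2)" and i2: "set_integrable lborel D (\<lambda>x. (norm (G x))\<^sup>2)"
    using assms by (auto simp: W12_def)
  show "ennreal (L2sq D g) = (\<integral>\<^sup>+x. ennreal ((g x)\<^sup>2) * indicator D x \<partial>lborel)" "L2sq D g \<ge> 0"
    using set_int_ennreal[OF i1] by (auto simp: L2sq_def)
  show "ennreal (L2sq_vec D G) = (\<integral>\<^sup>+x. ennreal ((norm (G x))\<^sup>2) * indicator D x \<partial>lborel)" "L2sq_vec D G \<ge> 0"
    using set_int_ennreal[OF i2] by (auto simp: L2sq_vec_def)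
qed

lemma test_bound:
  fixes f :: "'a::euclidean_space \<Rightarrow> real"
  assumes t: "test_fun UNIV f"
  shows "NI p UNIV f \<le> ennreal (L2sq UNIV f + 1/2 * L2sq_vec UNIV (grad f)) * (SUP r. hardy_sup (cube r :: 'a set) p)"
proof -
  define N where "N = L2sq UNIV f + 1/2 * L2sq_vec UNIV (grad f)"
  note w = W12_nn[OF test_W12[OF t]]
  show ?thesis
  proof (cases "N > 0")
    case True
    obtain r where r: "r > 0" "test_fun (cube r) f" using test_in_cube[OF t] by blast
    have "NI p UNIV f \<le> ennreal N * hardy_sup (cube r :: 'a set) p" by (rule norm_test[OF r(2) N_def True])
    also have "\<dots> \<le> ennreal N * (SUP r. hardy_sup (cube r :: 'a set) p)"
      by (intro mult_left_mono SUP_upper) auto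
    finally show ?thesis by (simp add: N_def)
  next
    case False
    then have "L2sq UNIV f = 0" using w(2,4) by (simp add: N_def)
    then have "(\<integral>\<^sup>+x. ennreal ((f x)\<^sup>2) \<partial>lborel) = 0" using w(1) by simp
    then have "AE x in lborel. ennreal ((f x)\<^sup>2) = 0"
      using smooth_meas[OF t[unfolded test_fun_def, THEN conjunct1]]
      by (subst (asm) nn_integral_0_iff_AE) auto
    then have "AE x in lborel. ennreal ((f x)\<^sup>2 * norm x powr - p) * indicator UNIV x = 0"
      by (rule AE_mp) (auto intro!: AE_I2)
    then have "NI p UNIV f = (\<integral>\<^sup>+(x::'a). 0 \<partial>lborel)" unfolding NI_def by (rule nn_integral_cong_AE)
    then have "NI p UNIV f = 0" by simp
    then show ?thesis by simp
  qed
qed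

lemma ennreal_half: "(a::real) \<ge> 0 \<Longrightarrow> b \<ge> 0 \<Longrightarrow> ennreal (a + 1/2 * b) = ennreal a + ennreal (1/2) * ennreal b"
proof -
  assume ab: "a \<ge> 0" "b \<ge> 0"
  have "ennreal (1/2 * b) = ennreal (1/2) * ennreal b" by (rule ennreal_mult) (use ab in auto)
  moreover have "ennreal (a + 1/2 * b) = ennreal a + ennreal (1/2 * b)" by (rule ennreal_plus) (use ab in auto)
  ultimately show ?thesis by (simp only:)
qed

lemma lower:
  fixes g :: "'a::euclidean_space \<Rightarrow> real"
  assumes GS: "(g, G) \<in> Gset UNIV" and p: "p \<ge> 0"
  shows "NI p UNIV g \<le> (SUP r. hardy_sup (cube r :: 'a set) p)"
proof (cases "(SUP r. hardy_sup (cube r :: 'a set) p) = top")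
  case True then show ?thesis by (simp only: True top_greatest)
next
  case False
  define S where "S = (SUP r. hardy_sup (cube r :: 'a set) p)"
  have St: "S < top" unfolding S_def using False by (rule less_top[THEN iffD1])
  from GS have W: "(g, G) \<in> W12 UNIV" and n: "L2sq UNIV g + 1/2 * L2sq_vec UNIV G = 1"
    by (auto simp: Gset_def)
  from W have gm[measurable]: "g \<in> borel_measurable borel" and Gm[measurable]: "G \<in> borel_measurable borel"
    by (auto simp: W12_def)
  from W obtain \<phi> where t: "\<And>k. test_fun UNIV (\<phi> k)"
    and c1: "(\<lambda>k. \<integral>\<^sup>+x\<in>UNIV. ennreal ((\<phi> k x - g x)\<^sup>2)\<partial>lborel) \<longlonglongrightarrow> 0"
    and c2: "(\<lambda>k. \<integral>\<^sup>+x\<in>UNIV. ennreal ((norm (grad (\<phi> k) x - G x))\<^sup>2)\<partial>lborel) \<longlonglongrightarrow> 0"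
    unfolding W12_def by blast
  have pm[measurable]: "\<phi> k \<in> borel_measurable borel" for k
    using smooth_meas[of "\<phi> k"] t[of k] by (simp add: test_fun_def)
  have pgm[measurable]: "grad (\<phi> k) \<in> borel_measurable borel" for k
    using smooth_grad_meas[of "\<phi> k"] t[of k] by (simp add: test_fun_def)
  define e where "e k = (\<integral>\<^sup>+x. ennreal ((\<phi> k x - g x)\<^sup>2) \<partial>lborel)" for k
  define f where "f k = (\<integral>\<^sup>+x. ennreal ((norm (grad (\<phi> k) x - G x))\<^sup>2) \<partial>lborel)" for k
  have e0: "e \<longlonglongrightarrow> 0" using c1 by (simp add: e_def[abs_def])
  have f0: "f \<longlonglongrightarrow> 0" using c2 by (simp add: f_def[abs_def])
  define Ag where "Ag = (\<integral>\<^sup>+x. ennreal ((g x)\<^sup>2) \<partial>lborel)"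
  define Bg where "Bg = (\<integral>\<^sup>+x. ennreal ((norm (G x))\<^sup>2) \<partial>lborel)"
  note wg = W12_nn[OF W]
  have AB: "Ag + ennreal (1/2) * Bg = 1"
  proof -
    have "ennreal (L2sq UNIV g + 1/2 * L2sq_vec UNIV G) = ennreal (L2sq UNIV g) + ennreal (1/2) * ennreal (L2sq_vec UNIV G)"
      using wg(2,4) by (rule ennreal_half)
    then show ?thesis unfolding n using wg(1,3) by (simp add: Ag_def Bg_def del: ennreal_half)
  qed
  define N where "N k = L2sq UNIV (\<phi> k) + 1/2 * L2sq_vec UNIV (grad (\<phi> k))" for k
  have Nk: "ennreal (N k) \<le> ennreal (1+d) + ennreal (1+1/d) * (e k + ennreal (1/2) * f k)" if d: "d > 0" for d k
  proof -
    note wp = W12_nn[OF test_W12[OF t[of k]]]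
    have "ennreal (N k) = (\<integral>\<^sup>+x. ennreal ((\<phi> k x)\<^sup>2) \<partial>lborel) + ennreal (1/2) * (\<integral>\<^sup>+x. ennreal ((norm (grad (\<phi> k) x))\<^sup>2) \<partial>lborel)"
      unfolding N_def ennreal_half[OF wp(2,4)] using wp(1,3) by simp
    also have "\<dots> \<le> (ennreal (1+d) * Ag + ennreal (1+1/d) * e k) + ennreal (1/2) * (ennreal (1+d) * Bg + ennreal (1+1/d) * f k)"
    proof (intro add_mono mult_left_mono order.refl)
      show "(\<integral>\<^sup>+x. ennreal ((\<phi> k x)\<^sup>2) \<partial>lborel) \<le> ennreal (1+d) * Ag + ennreal (1+1/d) * e k"
        unfolding Ag_def e_def by (rule nn_split) (use sq_split_real[OF d] d in auto)
      show "(\<integral>\<^sup>+x. ennreal ((norm (grad (\<phi> k) x))\<^sup>2) \<partial>lborel) \<le> ennreal (1+d) * Bg + ennreal (1+1/d) * f k"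
        unfolding Bg_def f_def by (rule nn_split) (use sq_split_norm[OF d] d in auto)
    qed simp
    also have "\<dots> = ennreal (1+d) * (Ag + ennreal (1/2) * Bg) + ennreal (1+1/d) * (e k + ennreal (1/2) * f k)"
      by (simp add: algebra_simps)
    finally show ?thesis using AB by simp
  qed
  define I where "I \<eta> = (\<integral>\<^sup>+x. ennreal ((g x)\<^sup>2 * norm x powr - p * indicator {x. \<eta> \<le> norm x} x) \<partial>lborel)" for \<eta>
  have Ik: "I \<eta> \<le> ennreal (1+d) * NI p UNIV (\<phi> k) + ennreal ((1+1/d) * \<eta> powr - p) * e k"
    if d: "d > 0" and eta: "\<eta> > 0" for d \<eta> k
  proof -
    have "NI p UNIV (\<phi> k) = (\<integral>\<^sup>+x. ennreal ((\<phi> k x)\<^sup>2 * norm x powr - p) \<partial>lborel)" by (simp add: NI_def)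
    moreover have "I \<eta> \<le> ennreal (1+d) * (\<integral>\<^sup>+x. ennreal ((\<phi> k x)\<^sup>2 * norm x powr - p) \<partial>lborel) + ennreal ((1+1/d) * \<eta> powr - p) * e k"
      unfolding I_def e_def
    proof (rule nn_split)
      fix x :: 'a
      show "(g x)\<^sup>2 * norm x powr - p * indicator {x. \<eta> \<le> norm x} x
          \<le> (1 + d) * ((\<phi> k x)\<^sup>2 * norm x powr - p) + (1 + 1 / d) * \<eta> powr - p * (\<phi> k x - g x)\<^sup>2"
      proof (cases "\<eta> \<le> norm x")
        case True
        have w: "norm x powr - p \<le> \<eta> powr - p" by (rule powr_mono2') (use p eta True in auto)
        have w0: "norm x powr - p \<ge> 0" by simp
        have "(g x)\<^sup>2 * norm x powr - p \<le> ((1 + d) * (\<phi> k x)\<^sup>2 + (1 + 1/d) * (\<phi> k x - g x)\<^sup>2) * norm x powr - p"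
          using sq_split_real[OF d, of "g x" "\<phi> k x"] w0
          by (intro mult_right_mono) (auto simp: power2_commute)
        also have "\<dots> = (1 + d) * ((\<phi> k x)\<^sup>2 * norm x powr - p) + (1 + 1/d) * (\<phi> k x - g x)\<^sup>2 * norm x powr - p"
          by (simp add: algebra_simps)
        also have "\<dots> \<le> (1 + d) * ((\<phi> k x)\<^sup>2 * norm x powr - p) + (1 + 1/d) * (\<phi> k x - g x)\<^sup>2 * \<eta> powr - p"
          using d w by (intro add_left_mono mult_left_mono) auto
        finally show ?thesis using True by (simp add: algebra_simps)
      next
        case False
        then show ?thesis using d by (auto intro!: add_nonneg_nonneg mult_nonneg_nonneg)
      qed
    qed (use d in auto)
    ultimately show ?thesis by simp
  qed
  have Id: "I \<eta> \<le> ennreal (1+d) * (S * ennreal (1+d))" if d: "d > 0" and eta: "\<eta> > 0" for d \<eta>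
  proof -
    have lim: "((\<lambda>k. ennreal (1+d) * (S * (ennreal (1+d) + ennreal (1+1/d) * (e k + ennreal (1/2) * f k)))
        + ennreal ((1+1/d) * \<eta> powr - p) * e k) \<longlongrightarrow>
      ennreal (1+d) * (S * (ennreal (1+d) + ennreal (1+1/d) * (0 + ennreal (1/2) * 0))) + ennreal ((1+1/d) * \<eta> powr - p) * 0) sequentially"
      by (intro tendsto_add ennreal_tendsto_cmult tendsto_const e0 f0 St ennreal_less_top)
    have ev: "\<forall>\<^sub>F k in sequentially. I \<eta> \<le> ennreal (1+d) * (S * (ennreal (1+d) + ennreal (1+1/d) * (e k + ennreal (1/2) * f k)))
        + ennreal ((1+1/d) * \<eta> powr - p) * e k"
    proof (intro always_eventually allI)
      fix k
      have "NI p UNIV (\<phi> k) \<le> ennreal (N k) * S" using test_bound[OF t[of k], of p] by (simp add: N_def S_def)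
      also have "\<dots> \<le> (ennreal (1+d) + ennreal (1+1/d) * (e k + ennreal (1/2) * f k)) * S"
        by (intro mult_right_mono Nk d) simp
      finally have "NI p UNIV (\<phi> k) \<le> S * (ennreal (1+d) + ennreal (1+1/d) * (e k + ennreal (1/2) * f k))"
        by (simp add: mult.commute)
      then show "I \<eta> \<le> ennreal (1+d) * (S * (ennreal (1+d) + ennreal (1+1/d) * (e k + ennreal (1/2) * f k)))
        + ennreal ((1+1/d) * \<eta> powr - p) * e k"
        using Ik[OF d eta, of k] by (meson add_right_mono mult_left_mono order_trans zero_le)
    qed
    have "I \<eta> \<le> ennreal (1+d) * (S * (ennreal (1+d) + ennreal (1+1/d) * (0 + ennreal (1/2) * 0))) + ennreal ((1+1/d) * \<eta> powr - p) * 0"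
      by (rule tendsto_lowerbound[OF lim ev]) simp
    then show ?thesis by simp
  qed
  have Ie: "I \<eta> \<le> S" if eta: "\<eta> > 0" for \<eta>
  proof -
    have Id2: "I \<eta> \<le> S * ennreal ((1 + inverse (real (Suc n)))\<^sup>2)" for n
    proof -
      have "I \<eta> \<le> ennreal (1 + inverse (real (Suc n))) * (S * ennreal (1 + inverse (real (Suc n))))"
        by (rule Id[OF _ eta]) simp
      also have "\<dots> = S * (ennreal (1 + inverse (real (Suc n))) * ennreal (1 + inverse (real (Suc n))))"
        by (simp add: algebra_simps)
      also have "\<dots> = S * ennreal ((1 + inverse (real (Suc n)))\<^sup>2)"
        by (simp add: power2_eq_square ennreal_mult)
      finally show ?thesis .
    qed
    have "(\<lambda>n. (1 + inverse (real (Suc n)))\<^sup>2) \<longlonglongrightarrow> (1 + 0)\<^sup>2"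
      by (intro tendsto_intros LIMSEQ_inverse_real_of_nat)
    then have "(\<lambda>n. ennreal ((1 + inverse (real (Suc n)))\<^sup>2)) \<longlonglongrightarrow> ennreal 1"
      by (intro tendsto_ennrealI) simp
    then have lim: "(\<lambda>n. S * ennreal ((1 + inverse (real (Suc n)))\<^sup>2)) \<longlonglongrightarrow> S * ennreal 1"
      by (intro ennreal_tendsto_cmult St)
    have "I \<eta> \<le> S * ennreal 1"
      by (rule tendsto_lowerbound[OF lim]) (use Id2 in \<open>auto intro: always_eventually\<close>)
    then show ?thesis by simp
  qed
  define F where "F n x = ennreal ((g x)\<^sup>2 * norm x powr - p * indicator {x. inverse (real (Suc n)) \<le> norm x} x)" for n x
  have Fm[measurable]: "F n \<in> borel_measurable lborel" for n unfolding F_def by measurable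
  have Finc: "incseq F"
  proof (intro incseq_SucI le_funI)
    fix n and x :: 'a
    have h: "inverse (real (Suc (Suc n))) \<le> inverse (real (Suc n))" by (simp add: field_simps)
    have "indicator {x. inverse (real (Suc n)) \<le> norm x} x \<le> (indicator {x. inverse (real (Suc (Suc n))) \<le> norm x} x :: real)"
      using h order_trans[OF h] by (auto simp: indicator_def)
    then show "F n x \<le> F (Suc n) x" unfolding F_def
      by (intro ennreal_leI mult_left_mono) auto
  qed
  have Fsup: "(SUP n. F n x) = ennreal ((g x)\<^sup>2 * norm x powr - p)" for x
  proof (cases "x = 0")
    case True then show ?thesis by (simp add: F_def)
  next
    case False
    then obtain n where n: "inverse (real (Suc n)) < norm x" using reals_Archimedean[of "norm x"] by auto
    show ?thesis
    proof (rule antisym)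
      show "(SUP n. F n x) \<le> ennreal ((g x)\<^sup>2 * norm x powr - p)"
        by (rule SUP_least) (auto simp: F_def indicator_def intro!: ennreal_leI)
      show "ennreal ((g x)\<^sup>2 * norm x powr - p) \<le> (SUP n. F n x)"
        by (rule SUP_upper2[of n]) (use n in \<open>auto simp: F_def\<close>)
    qed
  qed
  have "NI p UNIV g = (\<integral>\<^sup>+x. (SUP n. F n x) \<partial>lborel)" by (simp add: NI_def Fsup)
  also have "\<dots> = (SUP n. integral\<^sup>N lborel (F n))"
    by (rule nn_integral_monotone_convergence_SUP[OF Finc]) simp
  also have "\<dots> \<le> S"
  proof (rule SUP_least)
    fix n
    have "integral\<^sup>N lborel (F n) = I (inverse (real (Suc n)))" by (simp add: F_def[abs_def] I_def)
    also have "\<dots> \<le> S" by (rule Ie) simp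
    finally show "integral\<^sup>N lborel (F n) \<le> S" .
  qed
  finally show ?thesis by (simp add: S_def)
qed

lemma hardy_lim:
  assumes p: "p \<ge> 0"
  shows "((\<lambda>r. hardy_sup (cube r :: 'a::euclidean_space set) p) \<longlongrightarrow> rho TYPE('a) p) at_top"
proof -
  define f where "f r = hardy_sup (cube r :: 'a set) p" for r
  define R where "R = rho TYPE('a) p"
  have R: "R = hardy_sup (UNIV :: 'a set) p" by (simp add: R_def rho_def)
  have le: "f r \<le> R" for r unfolding f_def R by (rule hardy_mono[OF open_cube]) simp
  have mono: "r \<le> r' \<Longrightarrow> f r \<le> f r'" for r r' unfolding f_def by (rule hardy_mono[OF open_cube cube_mono])
  have ge: "R \<le> (SUP r. f r)"
  proof -
    have "Sup ((\<lambda>(g, G). NI p UNIV g) ` Gset (UNIV :: 'a set)) \<le> (SUP r. f r)"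
      unfolding f_def by (rule Sup_least) (auto intro: lower[OF _ p])
    then show ?thesis unfolding R hardy_sup_NI[of "UNIV :: 'a set"] .
  qed
  show ?thesis unfolding f_def[symmetric] R_def[symmetric]
  proof (rule order_tendstoI)
    fix a assume "a < R"
    then have "a < (SUP r. f r)" using ge by (rule less_le_trans)
    then obtain r0 where h: "a < f r0" by (auto simp: less_SUP_iff)
    show "\<forall>\<^sub>F r in at_top. a < f r"
      using eventually_ge_at_top[of r0] by eventually_elim (use mono h in \<open>auto intro: less_le_trans\<close>)
  next
    fix a assume "R < a"
    then show "\<forall>\<^sub>F r in at_top. f r < a" using le by (auto intro: le_less_trans always_eventually)
  qed
qed

lemma nn_dil:
  fixes h :: "'a::euclidean_space \<Rightarrow> ennreal"
  assumes [measurable]: "h \<in> borel_measurable borel" and c: "c > 0"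
  shows "(\<integral>\<^sup>+x. h (c *\<^sub>R x) \<partial>lborel) = ennreal (1 / c^DIM('a)) * (\<integral>\<^sup>+x. h x \<partial>lborel)"
proof -
  have "(\<integral>\<^sup>+x. h (c *\<^sub>R x) \<partial>lborel) = ennreal (\<bar>1/c\<bar>^DIM('a)) * (\<integral>\<^sup>+x. h (c *\<^sub>R ((1/c) *\<^sub>R x)) \<partial>lborel)"
    by (rule nn_scale[where f="\<lambda>x. h (c *\<^sub>R x)"]) (use c in auto)
  then show ?thesis using c by (simp add: power_one_over)
qed

lemma int_dil:
  fixes h :: "'a::euclidean_space \<Rightarrow> real"
  assumes i: "integrable lborel h" and nn: "\<And>x. h x \<ge> 0" and c: "c > 0"
  shows "integrable lborel (\<lambda>x. h (c *\<^sub>R x))"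
    "integral\<^sup>L lborel (\<lambda>x. h (c *\<^sub>R x)) = 1 / c^DIM('a) * integral\<^sup>L lborel h"
proof -
  have hm[measurable]: "h \<in> borel_measurable borel" using borel_measurable_integrable[OF i] by simp
  have e: "(\<integral>\<^sup>+x. ennreal (h (c *\<^sub>R x)) \<partial>lborel) = ennreal (1 / c^DIM('a)) * ennreal (integral\<^sup>L lborel h)"
    using nn_dil[of "\<lambda>x. ennreal (h x)" c] c nn_integral_eq_integral[OF i] nn by simp
  show i2: "integrable lborel (\<lambda>x. h (c *\<^sub>R x))"
    by (rule integrableI_nonneg) (use nn e in \<open>auto simp: ennreal_mult_less_top\<close>)
  have I1: "integral\<^sup>L lborel h \<ge> 0" using nn by (simp add: integral_nonneg)
  have I2: "integral\<^sup>L lborel (\<lambda>x. h (c *\<^sub>R x)) \<ge> 0" using nn by (simp add: integral_nonneg)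
  have "ennreal (integral\<^sup>L lborel (\<lambda>x. h (c *\<^sub>R x))) = (\<integral>\<^sup>+x. ennreal (h (c *\<^sub>R x)) \<partial>lborel)"
    using nn_integral_eq_integral[OF i2] nn by simp
  also have "\<dots> = ennreal (1 / c^DIM('a) * integral\<^sup>L lborel h)"
    unfolding e using I1 c by (subst ennreal_mult) auto
  finally show "integral\<^sup>L lborel (\<lambda>x. h (c *\<^sub>R x)) = 1 / c^DIM('a) * integral\<^sup>L lborel h"
    using I1 I2 c by (subst (asm) ennreal_inj) auto
qed

lemma powr_scale_norm:
  fixes x :: "'a::real_normed_vector" assumes c: "c > 0"
  shows "norm x powr - p = c powr p * norm (c *\<^sub>R x) powr - p"
proof -
  have "norm (c *\<^sub>R x) powr - p = c powr - p * norm x powr - p" using c by (simp add: powr_mult)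
  moreover have "c powr p * c powr - p = 1" using c by (simp add: powr_add[symmetric])
  ultimately show ?thesis by (simp add: mult.assoc[symmetric])
qed

lemma dilate:
  fixes f :: "'a::euclidean_space \<Rightarrow> real" and F :: "'a \<Rightarrow> 'a" and t c :: real
  assumes W: "(f, F) \<in> W12 UNIV" and c: "c > 0"
  defines "f' \<equiv> (\<lambda>x. t * f (c *\<^sub>R x))" and "F' \<equiv> (\<lambda>x. (t * c) *\<^sub>R F (c *\<^sub>R x))"
  shows "(f', F') \<in> W12 UNIV"
    "L2sq UNIV f' = t\<^sup>2 / c^DIM('a) * L2sq UNIV f"
    "L2sq_vec UNIV F' = t\<^sup>2 * c\<^sup>2 / c^DIM('a) * L2sq_vec UNIV F"
    "NI p UNIV f' = ennreal (t\<^sup>2 * c powr p / c^DIM('a)) * NI p UNIV f"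
proof -
  from W have fm[measurable]: "f \<in> borel_measurable borel" and Fm[measurable]: "F \<in> borel_measurable borel"
    and i1: "integrable lborel (\<lambda>x. (f x)\<^sup>2)" and i2: "integrable lborel (\<lambda>x. (norm (F x))\<^sup>2)"
    by (auto simp: W12_def set_integrable_def)
  from W obtain \<phi> where t: "\<And>k. test_fun UNIV (\<phi> k)"
    and c1: "(\<lambda>k. \<integral>\<^sup>+x. ennreal ((\<phi> k x - f x)\<^sup>2)\<partial>lborel) \<longlonglongrightarrow> 0"
    and c2: "(\<lambda>k. \<integral>\<^sup>+x. ennreal ((norm (grad (\<phi> k) x - F x))\<^sup>2)\<partial>lborel) \<longlonglongrightarrow> 0"
    unfolding W12_def by auto
  have pm[measurable]: "\<phi> k \<in> borel_measurable borel" for k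
    using smooth_meas[of "\<phi> k"] t[of k] by (simp add: test_fun_def)
  have pgm[measurable]: "grad (\<phi> k) \<in> borel_measurable borel" for k
    using smooth_grad_meas[of "\<phi> k"] t[of k] by (simp add: test_fun_def)
  note d1 = int_dil[OF i1 _ c] and d2 = int_dil[OF i2 _ c]
  have sq1: "(f' x)\<^sup>2 = t\<^sup>2 * (f (c *\<^sub>R x))\<^sup>2" for x by (simp add: f'_def power_mult_distrib)
  have sq2: "(norm (F' x))\<^sup>2 = (t * c)\<^sup>2 * (norm (F (c *\<^sub>R x)))\<^sup>2" for x
    by (simp add: F'_def power_mult_distrib)
  show "L2sq UNIV f' = t\<^sup>2 / c^DIM('a) * L2sq UNIV f"
    unfolding L2sq_def set_lebesgue_integral_def using d1(2) by (simp add: sq1)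
  show "L2sq_vec UNIV F' = t\<^sup>2 * c\<^sup>2 / c^DIM('a) * L2sq_vec UNIV F"
    unfolding L2sq_vec_def set_lebesgue_integral_def using d2(2) by (simp add: sq2 power_mult_distrib)
  show "NI p UNIV f' = ennreal (t\<^sup>2 * c powr p / c^DIM('a)) * NI p UNIV f"
  proof -
    have "NI p UNIV f' = (\<integral>\<^sup>+x. ennreal (t\<^sup>2 * c powr p) * ennreal ((f (c *\<^sub>R x))\<^sup>2 * norm (c *\<^sub>R x) powr - p) \<partial>lborel)"
      unfolding NI_def
      by (intro nn_integral_cong) (simp add: sq1 powr_scale_norm[OF c, of _ p] ennreal_mult[symmetric] mult_ac)
    also have "\<dots> = ennreal (t\<^sup>2 * c powr p) * (\<integral>\<^sup>+x. ennreal ((f (c *\<^sub>R x))\<^sup>2 * norm (c *\<^sub>R x) powr - p) \<partial>lborel)"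
      by (rule nn_integral_cmult) measurable
    also have "(\<integral>\<^sup>+x. ennreal ((f (c *\<^sub>R x))\<^sup>2 * norm (c *\<^sub>R x) powr - p) \<partial>lborel)
        = ennreal (1 / c^DIM('a)) * NI p UNIV f"
      unfolding NI_def using nn_dil[of "\<lambda>x. ennreal ((f x)\<^sup>2 * norm x powr - p)" c] c by simp
    finally show ?thesis using c by (simp add: ennreal_mult[symmetric] mult.assoc[symmetric])
  qed
  show "(f', F') \<in> W12 UNIV"
    unfolding W12_def
  proof (clarify, intro conjI)
    show "f' \<in> borel_measurable lborel" "F' \<in> borel_measurable lborel" unfolding f'_def F'_def by measurable
    show "set_integrable lborel UNIV (\<lambda>x. (f' x)\<^sup>2)"
      unfolding set_integrable_def sq1 using d1(1) by simp
    show "set_integrable lborel UNIV (\<lambda>x. (norm (F' x))\<^sup>2)"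
      unfolding set_integrable_def sq2 using d2(1) by simp
    define \<psi> where "\<psi> k = (\<lambda>x. t * \<phi> k (c *\<^sub>R x))" for k
    have tp: "test_fun UNIV (\<psi> k)" for k
      using test_fun_scale[OF t[of k], of c t] c by (auto simp: \<psi>_def test_fun_def)
    have gp: "grad (\<psi> k) x = (t * c) *\<^sub>R grad (\<phi> k) (c *\<^sub>R x)" for k x
      unfolding \<psi>_def by (rule grad_scale) (use smooth_diff t in \<open>auto simp: test_fun_def\<close>)
    have "(\<lambda>k. ennreal (t\<^sup>2 / c^DIM('a)) * (\<integral>\<^sup>+x. ennreal ((\<phi> k x - f x)\<^sup>2)\<partial>lborel)) \<longlonglongrightarrow> ennreal (t\<^sup>2 / c^DIM('a)) * 0"
      by (intro ennreal_tendsto_cmult c1) simp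
    moreover have "(\<integral>\<^sup>+x. ennreal ((\<psi> k x - f' x)\<^sup>2)\<partial>lborel) = ennreal (t\<^sup>2 / c^DIM('a)) * (\<integral>\<^sup>+x. ennreal ((\<phi> k x - f x)\<^sup>2)\<partial>lborel)" for k
    proof -
      have "(\<integral>\<^sup>+x. ennreal ((\<psi> k x - f' x)\<^sup>2)\<partial>lborel) = (\<integral>\<^sup>+x. ennreal (t\<^sup>2) * ennreal ((\<phi> k (c *\<^sub>R x) - f (c *\<^sub>R x))\<^sup>2)\<partial>lborel)"
        by (intro nn_integral_cong) (simp add: \<psi>_def f'_def ennreal_mult[symmetric] power_mult_distrib right_diff_distrib[symmetric])
      also have "\<dots> = ennreal (t\<^sup>2) * (\<integral>\<^sup>+x. ennreal ((\<phi> k (c *\<^sub>R x) - f (c *\<^sub>R x))\<^sup>2)\<partial>lborel)"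
        by (rule nn_integral_cmult) measurable
      also have "(\<integral>\<^sup>+x. ennreal ((\<phi> k (c *\<^sub>R x) - f (c *\<^sub>R x))\<^sup>2)\<partial>lborel) = ennreal (1 / c^DIM('a)) * (\<integral>\<^sup>+x. ennreal ((\<phi> k x - f x)\<^sup>2)\<partial>lborel)"
        using nn_dil[of "\<lambda>x. ennreal ((\<phi> k x - f x)\<^sup>2)" c] c by simp
      finally show ?thesis using c by (simp add: ennreal_mult[symmetric] mult.assoc[symmetric])
    qed
    ultimately have l1: "(\<lambda>k. \<integral>\<^sup>+x. ennreal ((\<psi> k x - f' x)\<^sup>2)\<partial>lborel) \<longlonglongrightarrow> 0" by simp
    have "(\<lambda>k. ennreal ((t * c)\<^sup>2 / c^DIM('a)) * (\<integral>\<^sup>+x. ennreal ((norm (grad (\<phi> k) x - F x))\<^sup>2)\<partial>lborel)) \<longlonglongrightarrow> ennreal ((t * c)\<^sup>2 / c^DIM('a)) * 0"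
      by (intro ennreal_tendsto_cmult c2) simp
    moreover have "(\<integral>\<^sup>+x. ennreal ((norm (grad (\<psi> k) x - F' x))\<^sup>2)\<partial>lborel) = ennreal ((t * c)\<^sup>2 / c^DIM('a)) * (\<integral>\<^sup>+x. ennreal ((norm (grad (\<phi> k) x - F x))\<^sup>2)\<partial>lborel)" for k
    proof -
      have "(\<integral>\<^sup>+x. ennreal ((norm (grad (\<psi> k) x - F' x))\<^sup>2)\<partial>lborel) = (\<integral>\<^sup>+x. ennreal ((t * c)\<^sup>2) * ennreal ((norm (grad (\<phi> k) (c *\<^sub>R x) - F (c *\<^sub>R x)))\<^sup>2)\<partial>lborel)"
        by (intro nn_integral_cong) (simp add: gp F'_def ennreal_mult[symmetric] power_mult_distrib scaleR_diff_right[symmetric])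
      also have "\<dots> = ennreal ((t * c)\<^sup>2) * (\<integral>\<^sup>+x. ennreal ((norm (grad (\<phi> k) (c *\<^sub>R x) - F (c *\<^sub>R x)))\<^sup>2)\<partial>lborel)"
        by (rule nn_integral_cmult) measurable
      also have "(\<integral>\<^sup>+x. ennreal ((norm (grad (\<phi> k) (c *\<^sub>R x) - F (c *\<^sub>R x)))\<^sup>2)\<partial>lborel) = ennreal (1 / c^DIM('a)) * (\<integral>\<^sup>+x. ennreal ((norm (grad (\<phi> k) x - F x))\<^sup>2)\<partial>lborel)"
        using nn_dil[of "\<lambda>x. ennreal ((norm (grad (\<phi> k) x - F x))\<^sup>2)" c] c by simp
      finally show ?thesis using c by (simp add: ennreal_mult[symmetric] mult.assoc[symmetric])
    qed
    ultimately have l2: "(\<lambda>k. \<integral>\<^sup>+x. ennreal ((norm (grad (\<psi> k) x - F' x))\<^sup>2)\<partial>lborel) \<longlonglongrightarrow> 0" by simp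
    show "\<exists>\<phi>. (\<forall>k. test_fun UNIV (\<phi> k)) \<and>
         (\<lambda>k. \<integral>\<^sup>+x\<in>UNIV. ennreal ((\<phi> k x - f' x)\<^sup>2)\<partial>lborel) \<longlonglongrightarrow> 0 \<and>
         (\<lambda>k. \<integral>\<^sup>+x\<in>UNIV. ennreal ((norm (grad (\<phi> k) x - F' x))\<^sup>2)\<partial>lborel) \<longlonglongrightarrow> 0"
      by (rule exI[of _ \<psi>]) (use tp l1 l2 in simp)
  qed
qed

definition c0 :: "real \<Rightarrow> real" where "c0 p = ((2 - p) / 2) powr ((2 - p) / 2) * p powr (p / 2)"

lemma c0_pos: "0 < p \<Longrightarrow> p < 2 \<Longrightarrow> c0 p > 0"
  by (simp add: c0_def)

lemma sqrt_powr: "(a::real) \<ge> 0 \<Longrightarrow> sqrt a powr e = a powr (e / 2)"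
  by (simp add: powr_half_sqrt[symmetric] powr_powr)

lemma amgm:
  fixes a b p :: real
  assumes p: "0 < p" "p < 2" and ab: "a \<ge> 0" "b \<ge> 0" "a + 1/2 * b = 1"
  shows "sqrt a powr (2 - p) * sqrt b powr p \<le> c0 p"
proof -
  define q where "q = p / 2"
  have q: "0 < q" "q < 1" using p by (auto simp: q_def)
  have L: "sqrt a powr (2 - p) * sqrt b powr p = a powr (1 - q) * b powr q"
    using ab by (simp add: sqrt_powr q_def diff_divide_distrib)
  have C: "c0 p = (1 - q) powr (1 - q) * (2 * q) powr q"
    by (simp add: c0_def q_def diff_divide_distrib)
  show ?thesis
  proof (cases "a = 0 \<or> b = 0")
    case True
    have z: "a powr (1 - q) * b powr q = 0" using q True by auto
    show ?thesis unfolding L z using c0_pos[OF p] by simp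
  next
    case False
    then have a: "a > 0" and b: "b > 0" using ab by auto
    have "(a / (1 - q)) powr (1 - q) * (b / (2 * q)) powr q \<le> (1 - q) * (a / (1 - q)) + q * (b / (2 * q))"
      by (rule Youngs_inequality_0) (use q a b in auto)
    also have "\<dots> = 1"
    proof -
      have "(1 - q) * (a / (1 - q)) = a" "q * (b / (2 * q)) = b / 2" using q by auto
      then show ?thesis using ab(3) by simp
    qed
    finally have "(a / (1 - q)) powr (1 - q) * (b / (2 * q)) powr q \<le> 1" .
    moreover have "(a / (1 - q)) powr (1 - q) * (b / (2 * q)) powr q
        = (a powr (1 - q) * b powr q) / ((1 - q) powr (1 - q) * (2 * q) powr q)"
      using q a b by (simp add: powr_divide)
    moreover have "(1 - q) powr (1 - q) * (2 * q) powr q > 0" using q by simp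
    ultimately have "a powr (1 - q) * b powr q \<le> (1 - q) powr (1 - q) * (2 * q) powr q"
      using q by (simp add: divide_le_eq_1)
    then show ?thesis using L C by simp
  qed
qed

lemma zero_NI:
  fixes f :: "'a::euclidean_space \<Rightarrow> real"
  assumes W: "(f, F) \<in> W12 UNIV" and z: "L2sq UNIV f = 0"
  shows "NI p UNIV f = 0"
proof -
  have fm[measurable]: "f \<in> borel_measurable borel" using W by (auto simp: W12_def)
  have "(\<integral>\<^sup>+x. ennreal ((f x)\<^sup>2) \<partial>lborel) = 0" using W12_nn(1)[OF W] z by simp
  then have "AE x in lborel. ennreal ((f x)\<^sup>2) = 0"
    by (subst (asm) nn_integral_0_iff_AE) auto
  then have "AE x in lborel. ennreal ((f x)\<^sup>2 * norm x powr - p) * indicator UNIV x = 0"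
    by (rule AE_mp) (auto intro!: AE_I2)
  then have "NI p UNIV f = (\<integral>\<^sup>+(x::'a). 0 \<partial>lborel)" unfolding NI_def by (rule nn_integral_cong_AE)
  then show "NI p UNIV f = 0" by simp
qed

definition Cs :: "'a::euclidean_space itself \<Rightarrow> real \<Rightarrow> ennreal set" where
  "Cs _ p = {C. \<forall>(f, F) \<in> W12 (UNIV :: 'a set).
       NI p UNIV f \<le> C * ennreal (sqrt (L2sq UNIV f) powr (2 - p) * sqrt (L2sq_vec UNIV F) powr p)}"

lemma sigma_Cs: "sigma TYPE('a::euclidean_space) p = Inf (Cs TYPE('a) p)"
  by (simp add: sigma_def Cs_def NI_def)

lemma rho_NI: "rho TYPE('a::euclidean_space) p = Sup ((\<lambda>(g, G). NI p UNIV g) ` Gset (UNIV :: 'a set))"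
  by (simp add: rho_def hardy_sup_NI)

lemma rho_le:
  assumes p: "0 < p" "p < 2"
  shows "rho TYPE('a::euclidean_space) p \<le> ennreal (c0 p) * sigma TYPE('a) p"
proof -
  let ?R = "rho TYPE('a) p"
  have c: "c0 p > 0" using c0_pos[OF p] .
  have RC: "?R \<le> C * ennreal (c0 p)" if C: "C \<in> Cs TYPE('a) p" for C
    unfolding rho_NI
  proof (rule Sup_least, clarify)
    fix g :: "'a \<Rightarrow> real" and G assume GS: "(g, G) \<in> Gset UNIV"
    then have W: "(g, G) \<in> W12 UNIV" and n: "L2sq UNIV g + 1/2 * L2sq_vec UNIV G = 1"
      by (auto simp: Gset_def)
    have "NI p UNIV g \<le> C * ennreal (sqrt (L2sq UNIV g) powr (2 - p) * sqrt (L2sq_vec UNIV G) powr p)"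
      using C W by (auto simp: Cs_def)
    also have "\<dots> \<le> C * ennreal (c0 p)"
      by (intro mult_left_mono ennreal_leI amgm[OF p] W12_nn[OF W] n) simp
    finally show "NI p UNIV g \<le> C * ennreal (c0 p)" .
  qed
  have "?R * ennreal (1 / c0 p) \<le> sigma TYPE('a) p"
    unfolding sigma_Cs
  proof (rule Inf_greatest)
    fix C assume C: "C \<in> Cs TYPE('a) p"
    have "?R * ennreal (1 / c0 p) \<le> C * ennreal (c0 p) * ennreal (1 / c0 p)"
      by (rule mult_right_mono[OF RC[OF C]]) simp
    also have "\<dots> = C"
    proof -
      have "ennreal (c0 p) * ennreal (1 / c0 p) = 1" using c by (simp add: ennreal_mult[symmetric])
      then show ?thesis by (simp add: mult.assoc)
    qed
    finally show "?R * ennreal (1 / c0 p) \<le> C" .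
  qed
  then have "?R * ennreal (1 / c0 p) * ennreal (c0 p) \<le> sigma TYPE('a) p * ennreal (c0 p)"
    by (rule mult_right_mono) simp
  moreover have "?R * ennreal (1 / c0 p) * ennreal (c0 p) = ?R"
    using c by (simp add: mult.assoc ennreal_mult[symmetric])
  ultimately show ?thesis by (simp add: mult.commute)
qed

lemma alg_id:
  fixes a b p :: real
  assumes p: "0 < p" "p < 2" and a: "a > 0" and b: "b > 0"
  defines "q \<equiv> p / 2"
  defines "l \<equiv> sqrt (2 * q / (1 - q) * a / b)"
  shows "a / ((1 - q) * l powr p) = (a powr (1 - q) * b powr q) / c0 p"
proof -
  have q: "0 < q" "q < 1" using p by (auto simp: q_def)
  have C: "c0 p = (1 - q) powr (1 - q) * (2 * q) powr q"
    by (simp add: c0_def q_def diff_divide_distrib)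
  have l1: "l powr p = (2 * q / (1 - q) * a / b) powr q"
    unfolding l_def using q a b by (subst sqrt_powr) (auto simp: q_def)
  also have "\<dots> = (2 * q) powr q / (1 - q) powr q * a powr q / b powr q"
    using q a b by (simp add: powr_mult powr_divide)
  finally have l2: "l powr p = (2 * q) powr q / (1 - q) powr q * a powr q / b powr q" .
  have e1: "(1 - q) / (1 - q) powr q = (1 - q) powr (1 - q)"
    using q by (simp add: powr_diff)
  have e2: "a powr (1 - q) = a / a powr q" using a by (simp add: powr_diff)
  have pos: "(1 - q) powr q > 0" "a powr q > 0" "b powr q > 0" "(2 * q) powr q > 0" "(1 - q) powr (1 - q) > 0"
    using q a b by auto
  have "(1 - q) * l powr p = ((1 - q) / (1 - q) powr q) * (2 * q) powr q * a powr q / b powr q"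
    unfolding l2 by simp
  also have "\<dots> = (1 - q) powr (1 - q) * (2 * q) powr q * a powr q / b powr q"
    by (simp only: e1)
  finally have e3: "(1 - q) * l powr p = (1 - q) powr (1 - q) * (2 * q) powr q * a powr q / b powr q" .
  show ?thesis unfolding C e2 e3 using pos by (simp add: field_simps)
qed

lemma gset_bound:
  assumes r: "rho TYPE('a::euclidean_space) p = ennreal r0" and GS: "(g, G) \<in> Gset (UNIV :: 'a set)"
  shows "NI p UNIV g \<le> ennreal r0"
proof -
  have "NI p UNIV g \<le> Sup ((\<lambda>(g, G). NI p UNIV g) ` Gset (UNIV :: 'a set))"
    by (rule SUP_upper2[OF GS]) simp
  then show ?thesis using r by (simp add: rho_NI)
qed

lemma in_Cs:
  assumes p: "0 < p" "p < 2" and r: "rho TYPE('a::euclidean_space) p = ennreal r0" and r0: "r0 \<ge> 0"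
  shows "ennreal (r0 / c0 p) \<in> Cs TYPE('a) p"
  unfolding Cs_def
proof (clarify)
  fix f :: "'a \<Rightarrow> real" and F assume W: "(f, F) \<in> W12 UNIV"
  define a where "a = L2sq UNIV f"
  define b where "b = L2sq_vec UNIV F"
  have ab: "a \<ge> 0" "b \<ge> 0" using W12_nn[OF W] by (auto simp: a_def b_def)
  have c: "c0 p > 0" using c0_pos[OF p] .
  note gb = gset_bound[OF r]
  show "NI p UNIV f \<le> ennreal (r0 / c0 p) * ennreal (sqrt (L2sq UNIV f) powr (2 - p) * sqrt (L2sq_vec UNIV F) powr p)"
  proof (cases "a = 0")
    case True
    then show ?thesis using zero_NI[OF W] by (simp add: a_def)
  next
    case False
    then have a: "a > 0" using ab by simp
    show ?thesis
    proof (cases "b = 0")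
      case True
      have bnd: "NI p UNIV f \<le> ennreal (r0 * a * l powr - p)" if l: "l > 0" for l
      proof -
        define t where "t = sqrt (l^DIM('a) / a)"
        have t2: "t\<^sup>2 = l^DIM('a) / a" using a l by (simp add: t_def)
        note d = dilate[OF W l, where t=t]
        have "L2sq UNIV (\<lambda>x. t * f (l *\<^sub>R x)) + 1/2 * L2sq_vec UNIV (\<lambda>x. (t * l) *\<^sub>R F (l *\<^sub>R x)) = 1"
          using d(2,3) True t2 a l by (simp add: a_def b_def)
        then have "((\<lambda>x. t * f (l *\<^sub>R x)), (\<lambda>x. (t * l) *\<^sub>R F (l *\<^sub>R x))) \<in> Gset UNIV"
          using d(1) by (simp add: Gset_def)
        from gb[OF this] d(4)[where p=p]
        have "ennreal (t\<^sup>2 * l powr p / l^DIM('a)) * NI p UNIV f \<le> ennreal r0" by simp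
        moreover have "t\<^sup>2 * l powr p / l^DIM('a) = l powr p / a" using t2 l a by simp
        ultimately have h: "ennreal (l powr p / a) * NI p UNIV f \<le> ennreal r0" by simp
        have m: "ennreal (a * l powr - p) * (ennreal (l powr p / a) * NI p UNIV f) \<le> ennreal (a * l powr - p) * ennreal r0"
          by (rule mult_left_mono[OF h]) simp
        have r1: "(a * l powr - p) * (l powr p / a) = 1" using a l by (simp add: powr_minus field_simps)
        have one: "ennreal (a * l powr - p) * ennreal (l powr p / a) = 1"
          by (subst ennreal_mult[symmetric]) (use r1 a l in auto)
        have "ennreal (a * l powr - p) * (ennreal (l powr p / a) * NI p UNIV f) = NI p UNIV f"
          by (simp only: mult.assoc[symmetric] one mult_1)
        moreover have "ennreal (a * l powr - p) * ennreal r0 = ennreal (r0 * a * l powr - p)"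
          by (subst ennreal_mult[symmetric]) (use a l r0 in \<open>auto simp: mult_ac\<close>)
        ultimately show ?thesis using m by simp
      qed
      have lim: "((\<lambda>l. ennreal (r0 * a * l powr - p)) \<longlongrightarrow> ennreal (r0 * a * 0)) at_top"
        by (intro tendsto_ennrealI tendsto_mult tendsto_const tendsto_neg_powr filterlim_ident) (use p in auto)
      have "NI p UNIV f \<le> ennreal (r0 * a * 0)"
        by (rule tendsto_lowerbound[OF lim]) (use bnd in \<open>auto intro: eventually_mono[OF eventually_gt_at_top[of "0::real"]]\<close>)
      then show ?thesis by simp
    next
      case False
      then have b: "b > 0" using ab by simp
      define q where "q = p / 2"
      have q: "0 < q" "q < 1" using p by (auto simp: q_def)
      define l where "l = sqrt (2 * q / (1 - q) * a / b)"
      have l: "l > 0" using q a b by (simp add: l_def)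
      have l2: "l\<^sup>2 = 2 * q / (1 - q) * a / b" using q a b by (simp add: l_def)
      define t where "t = sqrt ((1 - q) * l^DIM('a) / a)"
      have t2: "t\<^sup>2 = (1 - q) * l^DIM('a) / a" using a l q by (simp add: t_def)
      note d = dilate[OF W l, where t=t]
      have A': "L2sq UNIV (\<lambda>x. t * f (l *\<^sub>R x)) = 1 - q"
        using d(2) t2 a l by (simp add: a_def[symmetric])
      have B': "L2sq_vec UNIV (\<lambda>x. (t * l) *\<^sub>R F (l *\<^sub>R x)) = 2 * q"
      proof -
        have "L2sq_vec UNIV (\<lambda>x. (t * l) *\<^sub>R F (l *\<^sub>R x)) = t\<^sup>2 * l\<^sup>2 / l^DIM('a) * b"
          using d(3) by (simp add: b_def)
        also have "\<dots> = (1 - q) * l\<^sup>2 * b / a" using t2 l by simp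
        also have "\<dots> = 2 * q" using l2 a b q by simp
        finally show ?thesis .
      qed
      have "((\<lambda>x. t * f (l *\<^sub>R x)), (\<lambda>x. (t * l) *\<^sub>R F (l *\<^sub>R x))) \<in> Gset UNIV"
        using d(1) A' B' by (simp add: Gset_def)
      from gb[OF this] d(4)[where p=p]
      have "ennreal (t\<^sup>2 * l powr p / l^DIM('a)) * NI p UNIV f \<le> ennreal r0" by simp
      moreover have K: "t\<^sup>2 * l powr p / l^DIM('a) = (1 - q) * l powr p / a" using t2 l a by simp
      ultimately have h: "ennreal ((1 - q) * l powr p / a) * NI p UNIV f \<le> ennreal r0" by simp
      define K where "K = (1 - q) * l powr p / a"
      have Kp: "K > 0" using q l a by (simp add: K_def)
      have "ennreal (1 / K) * (ennreal K * NI p UNIV f) \<le> ennreal (1 / K) * ennreal r0"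
        by (rule mult_left_mono[OF h[folded K_def]]) simp
      have one: "ennreal (1 / K) * ennreal K = 1"
        by (subst ennreal_mult[symmetric]) (use Kp in auto)
      have "ennreal (1 / K) * (ennreal K * NI p UNIV f) = NI p UNIV f"
        by (simp only: mult.assoc[symmetric] one mult_1)
      moreover have "ennreal (1 / K) * ennreal r0 = ennreal (r0 / K)"
        by (subst ennreal_mult[symmetric]) (use Kp r0 in auto)
      ultimately have "NI p UNIV f \<le> ennreal (r0 / K)"
        using \<open>ennreal (1 / K) * (ennreal K * NI p UNIV f) \<le> ennreal (1 / K) * ennreal r0\<close> by simp
      also have "r0 / K = r0 * (a / ((1 - q) * l powr p))" by (simp add: K_def)
      also have "a / ((1 - q) * l powr p) = (a powr (1 - q) * b powr q) / c0 p"
        unfolding l_def q_def by (rule alg_id[OF p a b])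
      also have "a powr (1 - q) * b powr q = sqrt a powr (2 - p) * sqrt b powr p"
        using ab by (simp add: sqrt_powr q_def diff_divide_distrib)
      finally show ?thesis using r0 c ab
        by (simp add: a_def b_def ennreal_mult[symmetric] field_simps)
    qed
  qed
qed

lemma rho_sigma:
  assumes p: "0 < p" "p < 2"
  shows "rho TYPE('a::euclidean_space) p = ennreal (c0 p) * sigma TYPE('a) p"
proof (rule antisym)
  show "rho TYPE('a) p \<le> ennreal (c0 p) * sigma TYPE('a) p" by (rule rho_le[OF p])
  show "ennreal (c0 p) * sigma TYPE('a) p \<le> rho TYPE('a) p"
  proof (cases "rho TYPE('a) p = top")
    case True then show ?thesis by simp
  next
    case False
    then obtain r0 where r: "rho TYPE('a) p = ennreal r0" "r0 \<ge> 0"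
      by (metis less_top_ennreal top.not_eq_extremum)
    have c: "c0 p > 0" using c0_pos[OF p] .
    have "sigma TYPE('a) p \<le> ennreal (r0 / c0 p)"
      unfolding sigma_Cs by (rule Inf_lower[OF in_Cs[OF p r]])
    then have "ennreal (c0 p) * sigma TYPE('a) p \<le> ennreal (c0 p) * ennreal (r0 / c0 p)"
      by (rule mult_left_mono) simp
    also have "\<dots> = ennreal r0" by (subst ennreal_mult[symmetric]) (use c r in auto)
    finally show ?thesis using r by simp
  qed
qed

theorem mainTheorem13:
  fixes p :: real
  shows "((\<lambda>r. Sup ((\<lambda>(g, G). ennreal (L2sq (cube r) g)) ` Gset (cube r :: 'a::euclidean_space set)))
            \<longlongrightarrow> 1) at_top
    \<and> (real DIM('a) / 2 < p \<and> p < min 2 (real DIM('a)) \<longrightarrow>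
         ((\<lambda>r. hardy_sup (cube r :: 'a set) p) \<longlongrightarrow> rho TYPE('a) p) at_top
       \<and> rho TYPE('a) p = ennreal (((2 - p) / 2) powr ((2 - p) / 2) * p powr (p / 2)) * sigma TYPE('a) p)"
proof (intro conjI impI)
  show "((\<lambda>r. Sup ((\<lambda>(g, G). ennreal (L2sq (cube r) g)) ` Gset (cube r :: 'a::euclidean_space set)))
            \<longlongrightarrow> 1) at_top" by (rule part1)
  assume h: "real DIM('a) / 2 < p \<and> p < min 2 (real DIM('a))"
  have d: "real DIM('a) \<ge> 1" using DIM_positive[where 'a='a] by linarith
  have p: "0 < p" "p < 2" using h d by auto
  show "((\<lambda>r. hardy_sup (cube r :: 'a set) p) \<longlongrightarrow> rho TYPE('a) p) at_top"
    by (rule hardy_lim) (use p in simp)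
  show "rho TYPE('a) p = ennreal (((2 - p) / 2) powr ((2 - p) / 2) * p powr (p / 2)) * sigma TYPE('a) p"
    using rho_sigma[OF p, where 'a='a] by (simp add: c0_def)
qed

end
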